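(* Let $X$ be a Fréchet space and let $\Gamma:[0,1]\to ck(X)$ be integrable. Then $\Gamma$ is Pettis integrable in $ck(X)$, and for every Lebesgue measurable $E\subseteq[0,1]$ its Pettis integral over $E$ coincides with its integral over $E$.
   Context: $X$ is a Fréchet space with topology generated by an increasing sufficient sequence of seminorms $(p_i)$; $X^*$ its topological dual. $ck(X)$: nonempty compact convex subsets. $H_i(A,B)=\max(e_i(A,B),e_i(B,A))$, $e_i(A,B)=\sup_{a\in A}\inf_{b\in B}p_i(a-b)$. $\mathcal L$ the Lebesgue measurable subsets of $[0,1]$, $\mu$ Lebesgue measure. Support function $\sigma(x^*,C)=\sup_{x\in C}\langle x^*,x\rangle$. A simple multifunction is $\sum_j\chi_{A_j}C_j$ ($A_j\in\mathcal L$ pairwise disjoint, $C_j$ closed bounded convex), with $\int_E\sum_j\chi_{A_j}C_j:=\sum_j\mu(A_j\cap E)C_j$ (Minkowski sums, closure taken). Totally measurable: there are simple $\Gamma_n$ with $H_i(\Gamma_n(t),\Gamma(t))\to0$ a.e. for every $i$. Integrable: totally measurable and there exist simple $\Gamma_n:[0,1]\to ck(X)$ with $H_i(\Gamma_n(t),\Gamma(t))\to0$ a.e. for every $i$ and $\lim_{n,m}\int_0^1H_i(\Gamma_n,\Gamma_m)dt=0$ for every $i$; the integral $\int_E\Gamma$ is the $x_E\in ck(X)$ with $\lim_nH_i(\int_E\Gamma_n,x_E)=0$ for all $i$. Pettis integrable in $ck(X)$: $t\mapsto\sigma(x^*,\Gamma(t))$ is Lebesgue integrable for every $x^*\in X^*$,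 and for every $E\in\mathcal L$ there is $x_E\in ck(X)$ (the Pettis integral $(P)\int_E\Gamma$) with $\sigma(x^*,x_E)=\int_E\sigma(x^*,\Gamma(t))dt$ for all $x^*\in X^*$. *)

theory Defs
  imports "HOL-Analysis.Analysis"
begin

definition seminorm :: "('a::real_vector \<Rightarrow> real) \<Rightarrow> bool" where
  "seminorm q \<longleftrightarrow> (\<forall>x y. q (x + y) \<le> q x + q y) \<and> (\<forall>c x. q (c *\<^sub>R x) = \<bar>c\<bar> * q x)"

definition seminorm_topology :: "(nat \<Rightarrow> 'a::real_vector \<Rightarrow> real) \<Rightarrow> 'a topology" where
  "seminorm_topology p =
     topology_generated_by {{y. p i (y - x) < e} | i x e. e > 0}"

definition frechet_seminorms :: "(nat \<Rightarrow> 'a::real_vector \<Rightarrow> real) \<Rightarrow> bool" where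
  "frechet_seminorms p \<longleftrightarrow>
     (\<forall>i. seminorm (p i)) \<and>
     (\<forall>i x. p i x \<le> p (Suc i) x) \<and>
     (\<forall>x. (\<forall>i. p i x = 0) \<longrightarrow> x = 0) \<and>
     (\<forall>s::nat \<Rightarrow> 'a. (\<forall>i e. e > 0 \<longrightarrow> (\<exists>N. \<forall>m\<ge>N. \<forall>n\<ge>N. p i (s m - s n) < e))
         \<longrightarrow> (\<exists>l. \<forall>i. (\<lambda>n. p i (s n - l)) \<longlonglongrightarrow> 0))"

definition dual_space :: "(nat \<Rightarrow> 'a::real_vector \<Rightarrow> real) \<Rightarrow> ('a \<Rightarrow> real) set" where
  "dual_space p = {f. linear f \<and> continuous_map (seminorm_topology p) euclideanreal f}"

definition ck :: "(nat \<Rightarrow> 'a::real_vector \<Rightarrow> real) \<Rightarrow> 'a set set" where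
  "ck p = {C. C \<noteq> {} \<and> compactin (seminorm_topology p) C \<and> convex C}"

definition cbc :: "(nat \<Rightarrow> 'a::real_vector \<Rightarrow> real) \<Rightarrow> 'a set set" where
  "cbc p = {C. C \<noteq> {} \<and> closedin (seminorm_topology p) C \<and>
               (\<forall>i. \<exists>M. \<forall>x\<in>C. p i x \<le> M) \<and> convex C}"

definition hexcess :: "(nat \<Rightarrow> 'a::real_vector \<Rightarrow> real) \<Rightarrow> nat \<Rightarrow> 'a set \<Rightarrow> 'a set \<Rightarrow> real" where
  "hexcess p i A B = (SUP a\<in>A. INF b\<in>B. p i (a - b))"

definition hausdorff :: "(nat \<Rightarrow> 'a::real_vector \<Rightarrow> real) \<Rightarrow> nat \<Rightarrow> 'a set \<Rightarrow> 'a set \<Rightarrow> real" where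
  "hausdorff p i A B = max (hexcess p i A B) (hexcess p i B A)"

definition support_fun :: "('a \<Rightarrow> real) \<Rightarrow> 'a set \<Rightarrow> real" where
  "support_fun f C = (SUP x\<in>C. f x)"

definition msum :: "'a::real_vector set \<Rightarrow> 'a set \<Rightarrow> 'a set" where
  "msum X Y = {x + y | x y. x \<in> X \<and> y \<in> Y}"

text \<open>A simple multifunction is represented by a finite list of pairs (A_j, C_j).\<close>
definition simple_mf :: "'a set set \<Rightarrow> (real set \<times> 'a::real_vector set) list \<Rightarrow> bool" where
  "simple_mf K S \<longleftrightarrow>
     (\<forall>j<length S. fst (S!j) \<in> sets lebesgue \<and> fst (S!j) \<subseteq> {0..1} \<and> snd (S!j) \<in> K) \<and>
     (\<forall>j<length S. \<forall>k<length S. j \<noteq> k \<longrightarrow> fst (S!j) \<inter> fst (S!k) = {})"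

definition mf_eval :: "(real set \<times> 'a::real_vector set) list \<Rightarrow> real \<Rightarrow> 'a set" where
  "mf_eval S t = foldr (\<lambda>(A, C) B. msum ((\<lambda>x. indicator A t *\<^sub>R x) ` C) B) S {0}"

definition simple_int :: "(nat \<Rightarrow> 'a::real_vector \<Rightarrow> real) \<Rightarrow> (real set \<times> 'a set) list \<Rightarrow> real set \<Rightarrow> 'a set" where
  "simple_int p S E = (seminorm_topology p) closure_of
     (foldr (\<lambda>(A, C) B. msum ((\<lambda>x. measure lebesgue (A \<inter> E) *\<^sub>R x) ` C) B) S {0})"

definition totally_measurable :: "(nat \<Rightarrow> 'a::real_vector \<Rightarrow> real) \<Rightarrow> (real \<Rightarrow> 'a set) \<Rightarrow> bool" where
  "totally_measurable p \<Gamma> \<longleftrightarrow>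
     (\<exists>S::nat \<Rightarrow> (real set \<times> 'a set) list. (\<forall>n. simple_mf (cbc p) (S n)) \<and>
        (\<forall>i. AE t in lebesgue_on {0..1}. (\<lambda>n. hausdorff p i (mf_eval (S n) t) (\<Gamma> t)) \<longlonglongrightarrow> 0))"

definition integrable_seq :: "(nat \<Rightarrow> 'a::real_vector \<Rightarrow> real) \<Rightarrow> (real \<Rightarrow> 'a set) \<Rightarrow> (nat \<Rightarrow> (real set \<times> 'a set) list) \<Rightarrow> bool" where
  "integrable_seq p \<Gamma> S \<longleftrightarrow>
     (\<forall>n. simple_mf (ck p) (S n)) \<and>
     (\<forall>i. AE t in lebesgue_on {0..1}. (\<lambda>n. hausdorff p i (mf_eval (S n) t) (\<Gamma> t)) \<longlonglongrightarrow> 0) \<and>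
     (\<forall>i. \<forall>e>0. \<exists>N. \<forall>n\<ge>N. \<forall>m\<ge>N.
        (\<integral>\<^sup>+ t. ennreal (hausdorff p i (mf_eval (S n) t) (mf_eval (S m) t)) \<partial>lebesgue_on {0..1}) < ennreal e)"

definition mf_integrable :: "(nat \<Rightarrow> 'a::real_vector \<Rightarrow> real) \<Rightarrow> (real \<Rightarrow> 'a set) \<Rightarrow> bool" where
  "mf_integrable p \<Gamma> \<longleftrightarrow> totally_measurable p \<Gamma> \<and> (\<exists>S. integrable_seq p \<Gamma> S)"

definition mf_integral :: "(nat \<Rightarrow> 'a::real_vector \<Rightarrow> real) \<Rightarrow> (real \<Rightarrow> 'a set) \<Rightarrow> real set \<Rightarrow> 'a set \<Rightarrow> bool" where
  "mf_integral p \<Gamma> E x \<longleftrightarrow> x \<in> ck p \<and>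
     (\<exists>S. integrable_seq p \<Gamma> S \<and> (\<forall>i. (\<lambda>n. hausdorff p i (simple_int p (S n) E) x) \<longlonglongrightarrow> 0))"

definition pettis_integral :: "(nat \<Rightarrow> 'a::real_vector \<Rightarrow> real) \<Rightarrow> (real \<Rightarrow> 'a set) \<Rightarrow> real set \<Rightarrow> 'a set \<Rightarrow> bool" where
  "pettis_integral p \<Gamma> E x \<longleftrightarrow> x \<in> ck p \<and>
     (\<forall>f\<in>dual_space p. support_fun f x = (LINT t:E|lebesgue_on {0..1}. support_fun f (\<Gamma> t)))"

definition pettis_integrable :: "(nat \<Rightarrow> 'a::real_vector \<Rightarrow> real) \<Rightarrow> (real \<Rightarrow> 'a set) \<Rightarrow> bool" where
  "pettis_integrable p \<Gamma> \<longleftrightarrow>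
     (\<forall>f\<in>dual_space p. integrable (lebesgue_on {0..1}) (\<lambda>t. support_fun f (\<Gamma> t))) \<and>
     (\<forall>E. E \<in> sets lebesgue \<and> E \<subseteq> {0..1} \<longrightarrow> (\<exists>x. pettis_integral p \<Gamma> E x))"

end

theory Submission
  imports Defs
begin


lemma hahn_banach_sublinear:
  fixes q :: "'a::real_vector \<Rightarrow> real"
  assumes sub: "\<And>x y. q (x + y) \<le> q x + q y"
    and hom: "\<And>c x. c \<ge> 0 \<Longrightarrow> q (c *\<^sub>R x) = c * q x"
  shows "\<exists>f. linear f \<and> (\<forall>x. f x \<le> q x)"
proof -
  have q0: "q 0 = 0" using hom[of 0 0] by simp
  define valid where "valid G \<longleftrightarrow>
    (\<forall>x a y b. (x,a)\<in>G \<longrightarrow> (y,b)\<in>G \<longrightarrow> (x+y,a+b)\<in>G) \<and>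
    (\<forall>x a c. (x,a)\<in>G \<longrightarrow> (c *\<^sub>R x, c*a) \<in> G) \<and>
    (\<forall>x a. (x,a)\<in>G \<longrightarrow> a \<le> q x) \<and> (0,0) \<in> G" for G :: "('a \<times> real) set"
  define A where "A = {G. valid G}"
  have "{(0,0)} \<in> A" unfolding A_def valid_def by (auto simp: q0)
  hence Ane: "A \<noteq> {}" by auto
  have ch: "\<Union>C \<in> A" if Cne: "C \<noteq> {}" and chn: "subset.chain A C" for C
  proof -
    have CA: "C \<subseteq> A" and lin: "\<And>X Y. X\<in>C \<Longrightarrow> Y\<in>C \<Longrightarrow> X \<subseteq> Y \<or> Y \<subseteq> X"
      using chn unfolding subset.chain_def by auto
    have v: "valid X" if "X \<in> C" for X using CA that A_def by auto
    show ?thesis unfolding A_def mem_Collect_eq valid_def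
    proof (intro conjI allI impI)
      fix x a y b assume "(x,a) \<in> \<Union>C" "(y,b) \<in> \<Union>C"
      then obtain X Y where XY: "X\<in>C" "Y\<in>C" "(x,a)\<in>X" "(y,b)\<in>Y" by auto
      show "(x+y,a+b) \<in> \<Union>C"
      proof (cases "X \<subseteq> Y")
        case True then show ?thesis using XY v[of Y] unfolding valid_def by blast
      next
        case False then have "Y \<subseteq> X" using lin XY by blast
        then show ?thesis using XY v[of X] unfolding valid_def by blast
      qed
    next
      fix x a c assume "(x,a) \<in> \<Union>C"
      then show "(c *\<^sub>R x, c*a) \<in> \<Union>C" using v unfolding valid_def by blast
    next
      fix x a assume "(x,a) \<in> \<Union>C"
      then show "a \<le> q x" using v unfolding valid_def by blast
    next
      obtain X where "X \<in> C" using Cne by auto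
      then show "(0,0) \<in> \<Union>C" using v unfolding valid_def by blast
    qed
  qed
  obtain M where MA: "M \<in> A" and Mmax: "\<And>X. X\<in>A \<Longrightarrow> M \<subseteq> X \<Longrightarrow> X = M"
    using subset_Zorn_nonempty[OF Ane ch] by blast
  have vM: "valid M" using MA A_def by auto
  have addM: "\<And>x a y b. (x,a)\<in>M \<Longrightarrow> (y,b)\<in>M \<Longrightarrow> (x+y,a+b)\<in>M"
    and scM: "\<And>x a c. (x,a)\<in>M \<Longrightarrow> (c *\<^sub>R x, c*a) \<in> M"
    and domM: "\<And>x a. (x,a)\<in>M \<Longrightarrow> a \<le> q x" and zM: "(0,0)\<in>M"
    using vM unfolding valid_def by blast+
  have fn: "a = b" if "(x,a)\<in>M" "(x,b)\<in>M" for x a b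
  proof -
    have "(x + (-1) *\<^sub>R x, a + (-1)*b) \<in> M" using addM[OF that(1) scM[OF that(2)]] .
    hence 1: "a - b \<le> 0" using domM q0 by fastforce
    have "(x + (-1) *\<^sub>R x, b + (-1)*a) \<in> M" using addM[OF that(2) scM[OF that(1)]] .
    hence "b - a \<le> 0" using domM q0 by fastforce
    with 1 show ?thesis by simp
  qed
  have tot: "\<exists>a. (w,a) \<in> M" for w
  proof (rule ccontr)
    assume nw: "\<not> (\<exists>a. (w,a) \<in> M)"
    define T where "T = {b - q (y - w) | y b. (y,b) \<in> M}"
    define c where "c = Sup T"
    have bound: "b - q (y - w) \<le> q (x + w) - a" if "(y,b)\<in>M" "(x,a)\<in>M" for x a y b
    proof -
      have "b + a \<le> q (y + x)" using domM addM[OF that] by blast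
      also have "\<dots> = q ((y - w) + (x + w))" by (simp add: algebra_simps)
      also have "\<dots> \<le> q (y - w) + q (x + w)" by (rule sub)
      finally show ?thesis by simp
    qed
    have Tne: "T \<noteq> {}" using zM T_def by auto
    have Tbdd: "bdd_above T" unfolding bdd_above_def T_def using bound[OF _ zM] by auto
    have c_le: "c \<le> q (x + w) - a" if "(x,a)\<in>M" for x a
      unfolding c_def by (rule cSup_least[OF Tne]) (auto simp: T_def intro: bound[OF _ that])
    have c_ge: "b - q (y - w) \<le> c" if "(y,b)\<in>M" for y b
      unfolding c_def by (rule cSup_upper[OF _ Tbdd]) (use that T_def in auto)
    define M' where "M' = {(x + t *\<^sub>R w, a + t*c) | x a t. (x,a)\<in>M}"
    have "valid M'" unfolding valid_def
    proof (intro conjI allI impI)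
      fix x a y b assume "(x,a)\<in>M'" "(y,b)\<in>M'"
      then obtain x1 a1 t1 x2 a2 t2 where h: "(x1,a1)\<in>M" "(x2,a2)\<in>M"
        "x = x1 + t1 *\<^sub>R w" "a = a1 + t1*c" "y = x2 + t2 *\<^sub>R w" "b = a2 + t2*c"
        unfolding M'_def by blast
      have "(x+y, a+b) = ((x1+x2) + (t1+t2) *\<^sub>R w, (a1+a2) + (t1+t2)*c)"
        using h by (simp add: algebra_simps)
      then show "(x+y,a+b)\<in>M'" unfolding M'_def using addM[OF h(1,2)] by blast
    next
      fix x a d assume "(x,a)\<in>M'"
      then obtain x1 a1 t1 where h: "(x1,a1)\<in>M" "x = x1 + t1 *\<^sub>R w" "a = a1 + t1*c"
        unfolding M'_def by blast
      have "(d *\<^sub>R x, d*a) = (d *\<^sub>R x1 + (d*t1) *\<^sub>R w, d*a1 + (d*t1)*c)"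
        using h by (simp add: algebra_simps)
      then show "(d *\<^sub>R x, d*a)\<in>M'" unfolding M'_def using scM[OF h(1)] by blast
    next
      fix x a assume "(x,a)\<in>M'"
      then obtain x1 a1 t where h: "(x1,a1)\<in>M" "x = x1 + t *\<^sub>R w" "a = a1 + t*c"
        unfolding M'_def by blast
      show "a \<le> q x"
      proof (cases "t = 0")
        case True then show ?thesis using h domM by simp
      next
        case False
        show ?thesis
        proof (cases "t > 0")
          case True
          have m: "((1/t) *\<^sub>R x1, (1/t)*a1) \<in> M" by (rule scM[OF h(1)])
          have "c \<le> q ((1/t) *\<^sub>R x1 + w) - (1/t)*a1" by (rule c_le[OF m])
          hence "t*c \<le> t * q ((1/t) *\<^sub>R x1 + w) - a1" using True
            by (simp add: field_simps mult_left_mono)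
          also have "t * q ((1/t) *\<^sub>R x1 + w) = q (t *\<^sub>R ((1/t) *\<^sub>R x1 + w))"
            using hom[of t] True by simp
          also have "t *\<^sub>R ((1/t) *\<^sub>R x1 + w) = x" using h True by (simp add: scaleR_add_right)
          finally show ?thesis using h by simp
        next
          case False
          with \<open>t \<noteq> 0\<close> have s: "-t > 0" by simp
          have m: "((1/(-t)) *\<^sub>R x1, (1/(-t))*a1) \<in> M" by (rule scM[OF h(1)])
          have "(1/(-t))*a1 - q ((1/(-t)) *\<^sub>R x1 - w) \<le> c" by (rule c_ge[OF m])
          hence "(-t) * ((1/(-t))*a1 - q ((1/(-t)) *\<^sub>R x1 - w)) \<le> (-t) * c"
            using s by (simp add: mult_left_mono)
          hence "a1 - (-t) * q ((1/(-t)) *\<^sub>R x1 - w) \<le> -t*c" using s by (simp add: right_diff_distrib)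
          also have "(-t) * q ((1/(-t)) *\<^sub>R x1 - w) = q ((-t) *\<^sub>R ((1/(-t)) *\<^sub>R x1 - w))"
            using hom[of "-t"] s by simp
          also have "(-t) *\<^sub>R ((1/(-t)) *\<^sub>R x1 - w) = x" using h s by (simp add: scaleR_diff_right)
          finally show ?thesis using h by simp
        qed
      qed
    next
      show "(0,0) \<in> M'" unfolding M'_def using zM by force
    qed
    hence "M' \<in> A" using A_def by auto
    moreover have "M \<subseteq> M'" unfolding M'_def by force
    ultimately have "M' = M" using Mmax by blast
    moreover have "(w, c) \<in> M'" unfolding M'_def using zM by force
    ultimately show False using nw by blast
  qed
  define f where "f x = (THE a. (x,a)\<in>M)" for x
  have fM: "(x, f x) \<in> M" for x
    unfolding f_def using tot[of x] fn by (metis theI)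
  have feq: "f x = a" if "(x,a) \<in> M" for x a using fn[OF fM that] .
  have "linear f"
  proof (rule linearI)
    fix x y show "f (x + y) = f x + f y" using feq[OF addM[OF fM fM]] .
  next
    fix r x show "f (r *\<^sub>R x) = r *\<^sub>R f x" using feq[OF scM[OF fM]] by simp
  qed
  moreover have "\<forall>x. f x \<le> q x" using domM fM by blast
  ultimately show ?thesis by blast
qed



locale fre =
  fixes p :: "nat \<Rightarrow> 'a::real_vector \<Rightarrow> real"
  assumes fs: "frechet_seminorms p"
begin

lemmas fs_unf = fs[unfolded frechet_seminorms_def]
lemma fs1: "\<forall>i. seminorm (p i)" using fs_unf by (rule conjunct1)
lemma fs2: "\<forall>i x. p i x \<le> p (Suc i) x" using fs_unf[THEN conjunct2] by (rule conjunct1)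
lemma fs3: "\<forall>x. (\<forall>i. p i x = 0) \<longrightarrow> x = 0" using fs_unf[THEN conjunct2, THEN conjunct2] by (rule conjunct1)
lemma fs4: "\<forall>s::nat \<Rightarrow> 'a. (\<forall>i e. e > 0 \<longrightarrow> (\<exists>N. \<forall>m\<ge>N. \<forall>n\<ge>N. p i (s m - s n) < e))
         \<longrightarrow> (\<exists>l. \<forall>i. (\<lambda>n. p i (s n - l)) \<longlonglongrightarrow> 0)"
  using fs_unf[THEN conjunct2, THEN conjunct2] by (rule conjunct2)

lemma sub: "p i (x + y) \<le> p i x + p i y"
  using fs1 unfolding seminorm_def by blast
lemma hom: "p i (c *\<^sub>R x) = \<bar>c\<bar> * p i x"
  using fs1 unfolding seminorm_def by blast
lemma p0[simp]: "p i 0 = 0" using hom[of i 0 0] by simp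
lemma pminus: "p i (-x) = p i x" using hom[of i "-1" x] by simp
lemma nonneg[simp]: "0 \<le> p i x"
proof -
  have "p i 0 \<le> p i x + p i (-x)" using sub[of i x "-x"] by simp
  then show ?thesis by (simp add: pminus)
qed
lemma pcomm: "p i (x - y) = p i (y - x)" by (metis minus_diff_eq pminus)
lemma ptri: "p i (x - z) \<le> p i (x - y) + p i (y - z)" using sub[of i "x-y" "y-z"] by simp
lemma pmono: assumes "i \<le> j" shows "p i x \<le> p j x"
proof -
  have "\<And>n. p n x \<le> p (Suc n) x" using fs2 by blast
  then show ?thesis using lift_Suc_mono_le[of "\<lambda>i. p i x", OF _ assms] by blast
qed
lemma psep: "(\<And>i. p i x = 0) \<Longrightarrow> x = 0"
  using fs3 by blast
lemma pcomplete: "(\<And>i e. e>0 \<Longrightarrow> (\<exists>N. \<forall>m\<ge>N. \<forall>n\<ge>N. p i (s m - s n) < e))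
   \<Longrightarrow> \<exists>l. \<forall>i. (\<lambda>n. p i (s n - l)) \<longlonglongrightarrow> 0"
  using fs4 by blast
lemma pdiff: "\<bar>p i x - p i y\<bar> \<le> p i (x - y)"
  using sub[of i "x - y" y] sub[of i "y - x" x] pcomm[of i x y] by auto

definition pball where "pball i x e = {y. p i (y - x) < e}"

lemma pball_open_aux: "openin (seminorm_topology p) (pball i x e)"
proof (cases "e > 0")
  case True then show ?thesis
  unfolding seminorm_topology_def openin_topology_generated_by_iff pball_def
  by (intro generate_topology_on.Basis) blast
next
  case False
  then have "pball i x e = {}" unfolding pball_def using nonneg[of i] by (auto simp: not_less intro: order_trans)
  then show ?thesis by simp
qed

lemma openin_P: "openin (seminorm_topology p) U \<longleftrightarrow> (\<forall>x\<in>U. \<exists>i e. 0<e \<and> pball i x e \<subseteq> U)"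
proof
  assume "openin (seminorm_topology p) U"
  then have "generate_topology_on {{y. p i (y - x) < e} | i x e. e > 0} U"
    unfolding seminorm_topology_def openin_topology_generated_by_iff .
  then show "\<forall>x\<in>U. \<exists>i e. 0<e \<and> pball i x e \<subseteq> U"
  proof (induction rule: generate_topology_on.induct)
    case Empty then show ?case by simp
  next
    case (Int a b)
    show ?case
    proof
      fix x assume "x \<in> a \<inter> b"
      then obtain i1 e1 i2 e2 where h: "0<e1" "pball i1 x e1 \<subseteq> a" "0<e2" "pball i2 x e2 \<subseteq> b"
        using Int.IH by blast
      have "pball (max i1 i2) x (min e1 e2) \<subseteq> a \<inter> b"
      proof
        fix y assume "y \<in> pball (max i1 i2) x (min e1 e2)"
        then have "p (max i1 i2) (y - x) < min e1 e2" by (simp add: pball_def)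
        moreover have "p i1 (y - x) \<le> p (max i1 i2) (y - x)" "p i2 (y - x) \<le> p (max i1 i2) (y - x)"
          by (auto intro: pmono)
        ultimately show "y \<in> a \<inter> b" using h by (auto simp: pball_def)
      qed
      then show "\<exists>i e. 0<e \<and> pball i x e \<subseteq> a \<inter> b" using h(1,3)
        by (intro exI[of _ "max i1 i2"] exI[of _ "min e1 e2"]) simp
    qed
  next
    case (UN K) then show ?case by blast
  next
    case (Basis s)
    then obtain i x0 e where s: "s = {y. p i (y - x0) < e}" by blast
    show ?case
    proof
      fix x assume "x \<in> s"
      then have lt: "p i (x - x0) < e" using s by simp
      have "pball i x (e - p i (x - x0)) \<subseteq> s"
      proof
        fix y assume "y \<in> pball i x (e - p i (x - x0))"
        then have "p i (y - x) < e - p i (x - x0)" by (simp add: pball_def)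
        moreover have "p i (y - x0) \<le> p i (y - x) + p i (x - x0)" by (rule ptri)
        ultimately show "y \<in> s" using s by simp
      qed
      then show "\<exists>i e. 0<e \<and> pball i x e \<subseteq> s" using lt
        by (intro exI[of _ i] exI[of _ "e - p i (x - x0)"]) simp
    qed
  qed
next
  assume H: "\<forall>x\<in>U. \<exists>i e. 0<e \<and> pball i x e \<subseteq> U"
  have "U = \<Union>{B. B \<subseteq> U \<and> (\<exists>i x e. B = pball i x e)}"
  proof
    show "U \<subseteq> \<Union>{B. B \<subseteq> U \<and> (\<exists>i x e. B = pball i x e)}"
    proof
      fix x assume "x \<in> U"
      then obtain i e where "0<e" "pball i x e \<subseteq> U" using H by blast
      moreover have "x \<in> pball i x e" using \<open>0<e\<close> by (simp add: pball_def)
      ultimately show "x \<in> \<Union>{B. B \<subseteq> U \<and> (\<exists>i x e. B = pball i x e)}" by blast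
    qed
  qed blast
  also have "openin (seminorm_topology p) \<dots>"
    by (rule openin_Union) (use pball_open_aux in blast)
  finally show "openin (seminorm_topology p) U" .
qed

lemma pball_open: "openin (seminorm_topology p) (pball i x e)"
  by (rule pball_open_aux)

lemma topspace_P[simp]: "topspace (seminorm_topology p) = UNIV"
proof -
  have "openin (seminorm_topology p) UNIV" unfolding openin_P
    by (metis subset_UNIV zero_less_one)
  then show ?thesis using openin_subset by blast
qed

lemma closure_P: "y \<in> seminorm_topology p closure_of C \<longleftrightarrow> (\<forall>i e. e>0 \<longrightarrow> (\<exists>c\<in>C. p i (y - c) < e))"
proof
  assume y: "y \<in> seminorm_topology p closure_of C"
  show "\<forall>i e. e>0 \<longrightarrow> (\<exists>c\<in>C. p i (y - c) < e)"
  proof (intro allI impI)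
    fix i and e :: real assume "e > 0"
    then have "y \<in> pball i y e" by (simp add: pball_def)
    then obtain c where "c \<in> C" "c \<in> pball i y e"
      using y pball_open unfolding in_closure_of by blast
    then show "\<exists>c\<in>C. p i (y - c) < e" by (auto simp: pball_def pcomm)
  qed
next
  assume H: "\<forall>i e. e>0 \<longrightarrow> (\<exists>c\<in>C. p i (y - c) < e)"
  show "y \<in> seminorm_topology p closure_of C"
    unfolding in_closure_of
  proof (intro conjI allI impI)
    fix T assume "y \<in> T \<and> openin (seminorm_topology p) T"
    then obtain i e where "0<e" "pball i y e \<subseteq> T" unfolding openin_P by blast
    with H obtain c where "c\<in>C" "p i (y - c) < e" by blast
    moreover have "c \<in> pball i y e" using \<open>p i (y - c) < e\<close> by (simp add: pball_def pcomm)
    ultimately show "\<exists>c. c \<in> C \<and> c \<in> T" using \<open>pball i y e \<subseteq> T\<close> by blast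
  qed simp
qed

definition dd :: "'a \<Rightarrow> 'a \<Rightarrow> real" where
  "dd x y = (SUP i. min ((1/2)^i) (p i (x - y)))"

lemma dd_bdd: "bdd_above (range (\<lambda>i. min ((1/2::real)^i) (p i (x - y))))"
proof (rule bdd_aboveI)
  fix z assume "z \<in> range (\<lambda>i. min ((1/2::real)^i) (p i (x - y)))"
  then obtain i where "z = min ((1/2::real)^i) (p i (x - y))" by blast
  moreover have "(1/2::real)^i \<le> 1" by (simp add: power_le_one)
  ultimately show "z \<le> 1" by linarith
qed

lemma dd_ge: "min ((1/2)^i) (p i (x - y)) \<le> dd x y"
  unfolding dd_def by (rule cSUP_upper[OF _ dd_bdd]) simp

lemma dd_le: "0 \<le> e \<Longrightarrow> (1/2)^N \<le> e \<Longrightarrow> p N (x - y) \<le> e \<Longrightarrow> dd x y \<le> e"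
  unfolding dd_def
proof (rule cSUP_least)
  fix i assume "0 \<le> e" "(1/2)^N \<le> e" "p N (x - y) \<le> e"
  show "min ((1/2)^i) (p i (x - y)) \<le> e"
  proof (cases "i \<le> N")
    case True then show ?thesis using pmono[OF True, of "x - y"] \<open>p N (x - y) \<le> e\<close> by linarith
  next
    case False
    then have "(1/2::real)^i \<le> (1/2)^N" by (intro power_decreasing) auto
    then show ?thesis using \<open>(1/2)^N \<le> e\<close> by linarith
  qed
qed simp

lemma dd_p: "dd x y < (1/2)^i \<Longrightarrow> p i (x - y) \<le> dd x y"
  using dd_ge[of i x y] by (simp add: min_def split: if_splits)

lemma dd_nonneg: "0 \<le> dd x y"
proof -
  have "0 \<le> min ((1/2::real)^0) (p 0 (x - y))" by simp
  then show ?thesis using dd_ge[of 0 x y] by linarith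
qed

lemma small_pow: "0 < r \<Longrightarrow> \<exists>N. (1/2::real)^N < r"
  using real_arch_pow_inv[of r "1/2"] by simp

lemma min_tri: "0 \<le> (a::real) \<Longrightarrow> 0 \<le> u \<Longrightarrow> 0 \<le> v \<Longrightarrow> w \<le> u + v \<Longrightarrow> min a w \<le> min a u + min a v"
  by (auto simp: min_def)

lemma metric: "Metric_space UNIV dd"
proof
  fix x y show "0 \<le> dd x y" by (rule dd_nonneg)
  show "dd x y = dd y x" unfolding dd_def by (simp add: pcomm)
  show "dd x y = 0 \<longleftrightarrow> x = y"
  proof
    assume 0: "dd x y = 0"
    have "p i (x - y) = 0" for i
    proof -
      have "min ((1/2)^i) (p i (x - y)) \<le> 0" using dd_ge[of i x y] 0 by simp
      moreover have "(0::real) < (1/2)^i" by simp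
      ultimately show ?thesis using nonneg[of i "x - y"] unfolding min_le_iff_disj by linarith
    qed
    then show "x = y" using psep[of "x - y"] by simp
  next
    assume "x = y"
    have "dd x x \<le> 0 + e" if epos: "e > 0" for e
    proof -
      obtain N where "(1/2::real)^N < e" using small_pow[OF epos] by blast
      then show ?thesis using dd_le[of e N x x] epos by simp
    qed
    then have "dd x x \<le> 0" by (rule field_le_epsilon)
    then show "dd x y = 0" using dd_nonneg[of x x] \<open>x = y\<close> by simp
  qed
next
  fix x y z
  show "dd x z \<le> dd x y + dd y z"
    unfolding dd_def
  proof (rule cSUP_least)
    fix i
    have "p i (x - z) \<le> p i (x - y) + p i (y - z)" by (rule ptri)
    then have "min ((1/2)^i) (p i (x - z)) \<le> min ((1/2)^i) (p i (x - y)) + min ((1/2)^i) (p i (y - z))"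
      using min_tri[of "(1/2)^i" "p i (x - y)" "p i (y - z)" "p i (x - z)"] by simp
    also have "\<dots> \<le> dd x y + dd y z" using dd_ge[of i x y] dd_ge[of i y z] by simp
    finally show "min ((1/2)^i) (p i (x - z)) \<le> (SUP i. min ((1/2)^i) (p i (x - y))) + (SUP i. min ((1/2)^i) (p i (y - z)))"
      unfolding dd_def .
  qed simp
qed

interpretation Mt: Metric_space UNIV dd by (rule metric)


lemma P_eq: "seminorm_topology p = Mt.mtopology"
proof (rule topology_eq[THEN iffD2], intro allI)
  fix U
  show "openin (seminorm_topology p) U = openin Mt.mtopology U"
    unfolding openin_P Mt.openin_mtopology
  proof safe
    fix x assume H: "\<forall>x\<in>U. \<exists>i e. 0 < e \<and> pball i x e \<subseteq> U" and "x \<in> U"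
    then obtain i e where ie: "0<e" "pball i x e \<subseteq> U" by blast
    have "Mt.mball x (min ((1/2)^i) e) \<subseteq> U"
    proof
      fix y assume "y \<in> Mt.mball x (min ((1/2)^i) e)"
      then have "dd x y < min ((1/2)^i) e" by (simp add: Mt.mball_def)
      then have "p i (x - y) < e" using dd_p[of x y i] by simp
      then show "y \<in> U" using ie by (auto simp: pball_def pcomm)
    qed
    moreover have "min ((1/2::real)^i) e > 0" using ie by simp
    ultimately show "\<exists>r>0. Mt.mball x r \<subseteq> U" by blast
  next
    fix x assume H: "\<forall>x. x \<in> U \<longrightarrow> (\<exists>r>0. Mt.mball x r \<subseteq> U)" and "x \<in> U"
    then obtain r where r: "r>0" "Mt.mball x r \<subseteq> U" by blast
    obtain N where N: "(1/2::real)^N < r/2" using small_pow[of "r/2"] r by auto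
    have "pball N x (r/2) \<subseteq> U"
    proof
      fix y assume "y \<in> pball N x (r/2)"
      then have "p N (x - y) \<le> r/2" by (simp add: pball_def pcomm)
      then have "dd x y \<le> r/2" using dd_le[of "r/2" N x y] N r by simp
      then show "y \<in> U" using r by (auto simp: Mt.mball_def)
    qed
    then show "\<exists>i e. 0 < e \<and> pball i x e \<subseteq> U" using r
      by (intro exI[of _ N] exI[of _ "r/2"]) simp
  qed simp
qed

lemma mcomplete: "Mt.mcomplete"
  unfolding Mt.mcomplete_def
proof (intro allI impI)
  fix s assume "Mt.MCauchy s"
  then have C: "\<forall>e>0. \<exists>N. \<forall>n n'. N \<le> n \<longrightarrow> N \<le> n' \<longrightarrow> dd (s n) (s n') < e"
    by (simp add: Mt.MCauchy_def)
  have "\<exists>N. \<forall>m\<ge>N. \<forall>n\<ge>N. p i (s m - s n) < e" if epos: "e > 0" for i e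
  proof -
    have "\<exists>N. \<forall>n n'. N \<le> n \<longrightarrow> N \<le> n' \<longrightarrow> dd (s n) (s n') < min ((1/2)^i) e"
      by (rule mp[OF spec[OF C]]) (use epos in simp)
    then obtain N where N: "\<forall>n n'. N \<le> n \<longrightarrow> N \<le> n' \<longrightarrow> dd (s n) (s n') < min ((1/2)^i) e"
      by blast
    show ?thesis
    proof (intro exI allI impI)
      fix m n assume "N \<le> m" "N \<le> n"
      then have "dd (s m) (s n) < min ((1/2)^i) e" using N by blast
      then show "p i (s m - s n) < e" using dd_p[of "s m" "s n" i] by simp
    qed
  qed
  then obtain l where l: "\<forall>i. (\<lambda>n. p i (s n - l)) \<longlonglongrightarrow> 0" using pcomplete by blast
  have "limitin Mt.mtopology s l sequentially"
    unfolding Mt.limitin_metric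
  proof (intro conjI allI impI)
    fix e :: real assume "e > 0"
    obtain N where N: "(1/2::real)^N < e/2" using small_pow[of "e/2"] \<open>e>0\<close> by auto
    have "eventually (\<lambda>n. p N (s n - l) < e/2) sequentially"
      using order_tendstoD(2)[OF spec[OF l, of N], of "e/2"] \<open>e>0\<close> by simp
    then show "eventually (\<lambda>n. s n \<in> UNIV \<and> dd (s n) l < e) sequentially"
    proof (rule eventually_mono)
      fix n assume "p N (s n - l) < e/2"
      then have "dd (s n) l \<le> e/2" using dd_le[of "e/2" N "s n" l] N \<open>e>0\<close> by simp
      then show "s n \<in> UNIV \<and> dd (s n) l < e" using \<open>e>0\<close> by simp
    qed
  qed simp
  then show "\<exists>x. limitin Mt.mtopology s x sequentially" by blast
qed

definition ptb :: "'a set \<Rightarrow> bool" where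
  "ptb S \<longleftrightarrow> (\<forall>i e. e > 0 \<longrightarrow> (\<exists>F. finite F \<and> F \<subseteq> S \<and> (\<forall>y\<in>S. \<exists>x\<in>F. p i (y - x) < e)))"

lemma ptbD: assumes H: "ptb S" and e: "e > 0"
  shows "\<exists>F. finite F \<and> F \<subseteq> S \<and> (\<forall>y\<in>S. \<exists>x\<in>F. p i (y - x) < e)"
  by (rule mp[OF spec[OF spec[OF H[unfolded ptb_def], of i], of e] e])

lemma ptb_iff: "ptb S \<longleftrightarrow> Mt.mtotally_bounded S"
proof
  assume H: "ptb S"
  show "Mt.mtotally_bounded S" unfolding Mt.mtotally_bounded_def
  proof (intro allI impI)
    fix e :: real assume "e > 0"
    obtain N where N: "(1/2::real)^N < e/2" using small_pow[of "e/2"] \<open>e>0\<close> by auto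
    obtain F where F: "finite F" "F \<subseteq> S" "\<forall>y\<in>S. \<exists>x\<in>F. p N (y - x) < e/2"
      using H \<open>e>0\<close> unfolding ptb_def by (meson half_gt_zero)
    have "S \<subseteq> (\<Union>x\<in>F. Mt.mball x e)"
    proof
      fix y assume "y \<in> S"
      then obtain x where "x\<in>F" "p N (y - x) < e/2" using F by blast
      then have "dd x y \<le> e/2" using dd_le[of "e/2" N x y] N \<open>e>0\<close> by (simp add: pcomm)
      then have "y \<in> Mt.mball x e" using \<open>e>0\<close> by (simp add: Mt.mball_def)
      then show "y \<in> (\<Union>x\<in>F. Mt.mball x e)" using \<open>x\<in>F\<close> by blast
    qed
    then show "\<exists>K. finite K \<and> K \<subseteq> S \<and> S \<subseteq> (\<Union>x\<in>K. Mt.mball x e)" using F by blast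
  qed
next
  assume H: "Mt.mtotally_bounded S"
  show "ptb S" unfolding ptb_def
  proof (intro allI impI)
    fix i and e :: real assume "e > 0"
    then have "min ((1/2)^i) e > 0" by simp
    then have "\<exists>K. finite K \<and> K \<subseteq> S \<and> S \<subseteq> (\<Union>x\<in>K. Mt.mball x (min ((1/2)^i) e))"
      by (rule mp[OF spec[OF H[unfolded Mt.mtotally_bounded_def]]])
    then obtain K where K: "finite K" "K \<subseteq> S" "S \<subseteq> (\<Union>x\<in>K. Mt.mball x (min ((1/2)^i) e))"
      by blast
    have "\<forall>y\<in>S. \<exists>x\<in>K. p i (y - x) < e"
    proof
      fix y assume "y \<in> S"
      then obtain x where "x \<in> K" "dd x y < min ((1/2)^i) e" using K by (auto simp: Mt.mball_def)
      then have "p i (x - y) < e" using dd_p[of x y i] by simp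
      then show "\<exists>x\<in>K. p i (y - x) < e" using \<open>x\<in>K\<close> by (auto simp: pcomm)
    qed
    then show "\<exists>F. finite F \<and> F \<subseteq> S \<and> (\<forall>y\<in>S. \<exists>x\<in>F. p i (y - x) < e)" using K by blast
  qed
qed

lemma compact_ptb: "compactin (seminorm_topology p) S \<Longrightarrow> ptb S"
  unfolding ptb_iff P_eq by (rule Mt.compactin_imp_mtotally_bounded)

lemma compact_closed: "compactin (seminorm_topology p) S \<Longrightarrow> closedin (seminorm_topology p) S"
  unfolding P_eq by (rule compactin_imp_closedin_gen[OF Hausdorff_imp_kc_space[OF Mt.Hausdorff_space_mtopology]])

lemma closedI: assumes "\<And>y. (\<forall>i e. e>0 \<longrightarrow> (\<exists>c\<in>S. p i (y - c) < e)) \<Longrightarrow> y \<in> S"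
  shows "closedin (seminorm_topology p) S"
proof -
  have "seminorm_topology p closure_of S \<subseteq> S" using assms closure_P by blast
  moreover have "S \<subseteq> seminorm_topology p closure_of S" by (rule closure_of_subset) simp
  ultimately show ?thesis using closure_of_eq by blast
qed

lemma ptb_closed_compact: "ptb S \<Longrightarrow> closedin (seminorm_topology p) S \<Longrightarrow> compactin (seminorm_topology p) S"
proof -
  assume "ptb S" "closedin (seminorm_topology p) S"
  then have "compactin Mt.mtopology (Mt.mtopology closure_of S)"
    using Mt.mtotally_bounded_eq_compact_closure_of[OF mcomplete, of S] unfolding ptb_iff by blast
  moreover have "Mt.mtopology closure_of S = S" using \<open>closedin (seminorm_topology p) S\<close>
    unfolding P_eq by (rule closure_of_closedin)
  ultimately show ?thesis unfolding P_eq by simp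
qed

lemma ptb_bounded: "ptb S \<Longrightarrow> \<exists>M. \<forall>x\<in>S. p i x \<le> M"
proof -
  assume "ptb S"
  then have "\<exists>F. finite F \<and> F \<subseteq> S \<and> (\<forall>y\<in>S. \<exists>x\<in>F. p i (y - x) < 1)"
    by (rule ptbD) simp
  then obtain F where F: "finite F" "F \<subseteq> S" "\<forall>y\<in>S. \<exists>x\<in>F. p i (y - x) < 1"
    by (elim exE conjE) (rule that)
  have "p i y \<le> 1 + sum (p i) F" if yS: "y \<in> S" for y
  proof -
    obtain x where x: "x \<in> F" "p i (y - x) < 1" using F(3) yS by blast
    have "p i y \<le> p i (y - x) + p i x" using sub[of i "y - x" x] by simp
    also have "p i x \<le> sum (p i) F" using x F by (intro member_le_sum) auto
    finally show ?thesis using x by simp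
  qed
  then show ?thesis by (intro exI[of _ "1 + sum (p i) F"] ballI)
qed

lemma compact_sep: assumes "compactin (seminorm_topology p) K" "z \<notin> K"
  shows "\<exists>i e. e > 0 \<and> (\<forall>k\<in>K. e \<le> p i (z - k))"
proof -
  have "seminorm_topology p closure_of K = K" using compact_closed[OF assms(1)] by (rule closure_of_closedin)
  then have "z \<notin> seminorm_topology p closure_of K" using assms(2) by simp
  then have "\<not> (\<forall>i e. e>0 \<longrightarrow> (\<exists>c\<in>K. p i (z - c) < e))" unfolding closure_P .
  then obtain i e where "e > 0" "\<forall>c\<in>K. \<not> p i (z - c) < e" by auto
  then show ?thesis by (auto simp: not_less)
qed

end


context fre begin

definition pd :: "nat \<Rightarrow> 'a \<Rightarrow> 'a set \<Rightarrow> real" where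
  "pd i y B = (INF b\<in>B. p i (y - b))"

definition bnd :: "'a set \<Rightarrow> bool" where
  "bnd S \<longleftrightarrow> (\<forall>i. \<exists>M. \<forall>x\<in>S. p i x \<le> M)"

lemma bndD: "bnd S \<Longrightarrow> \<exists>M. \<forall>x\<in>S. p i x \<le> M"
  unfolding bnd_def by blast

lemma hexcess_pd: "hexcess p i A B = (SUP a\<in>A. pd i a B)"
  unfolding hexcess_def pd_def ..

lemma pd_bdd: "bdd_below ((\<lambda>b. p i (y - b)) ` B)"
  by (rule bdd_belowI[of _ 0]) auto

lemma pd_le: "b \<in> B \<Longrightarrow> pd i y B \<le> p i (y - b)"
  unfolding pd_def by (rule cINF_lower[OF pd_bdd])

lemma pd_nonneg: "B \<noteq> {} \<Longrightarrow> 0 \<le> pd i y B"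
  unfolding pd_def by (rule cINF_greatest) auto

lemma hex_bdd: assumes "bnd A" "B \<noteq> {}" shows "bdd_above ((\<lambda>a. pd i a B) ` A)"
proof -
  obtain b0 where b0: "b0 \<in> B" using assms(2) by blast
  obtain M where M: "\<forall>x\<in>A. p i x \<le> M" using bndD[OF assms(1)] by blast
  show ?thesis
  proof (rule bdd_aboveI[of _ "M + p i b0"])
    fix z assume "z \<in> (\<lambda>a. pd i a B) ` A"
    then obtain a where a: "a \<in> A" "z = pd i a B" by blast
    have "pd i a B \<le> p i (a - b0)" by (rule pd_le[OF b0])
    also have "\<dots> \<le> p i a + p i b0" using sub[of i a "-b0"] pminus[of i b0] by simp
    finally show "z \<le> M + p i b0" using a M by fastforce
  qed
qed

lemma hex_upper: "bnd A \<Longrightarrow> B \<noteq> {} \<Longrightarrow> a \<in> A \<Longrightarrow> pd i a B \<le> hexcess p i A B"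
  unfolding hexcess_pd by (rule cSUP_upper[OF _ hex_bdd])

lemma hex_least: "A \<noteq> {} \<Longrightarrow> (\<And>a. a \<in> A \<Longrightarrow> pd i a B \<le> e) \<Longrightarrow> hexcess p i A B \<le> e"
  unfolding hexcess_pd by (rule cSUP_least)

lemma hex_nonneg: "bnd A \<Longrightarrow> A \<noteq> {} \<Longrightarrow> B \<noteq> {} \<Longrightarrow> 0 \<le> hexcess p i A B"
  using hex_upper pd_nonneg by (meson all_not_in_conv order_trans)

definition dominated :: "('a \<Rightarrow> real) \<Rightarrow> nat \<Rightarrow> real \<Rightarrow> bool" where
  "dominated f k c \<longleftrightarrow> linear f \<and> c > 0 \<and> (\<forall>x. \<bar>f x\<bar> \<le> c * p k x)"

lemma sf_bdd: assumes "dominated f k c" "bnd A" shows "bdd_above (f ` A)"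
proof -
  obtain M where M: "\<forall>x\<in>A. p k x \<le> M" using bndD[OF assms(2)] by blast
  show ?thesis
  proof (rule bdd_aboveI[of _ "c * M"])
    fix z assume "z \<in> f ` A"
    then obtain a where a: "a \<in> A" "z = f a" by blast
    have "f a \<le> c * p k a" using assms(1) unfolding dominated_def by (metis abs_le_D1)
    also have "\<dots> \<le> c * M" using M a assms(1) unfolding dominated_def by (simp add: mult_left_mono)
    finally show "z \<le> c * M" using a by simp
  qed
qed

lemma sf_upper: "dominated f k c \<Longrightarrow> bnd A \<Longrightarrow> a \<in> A \<Longrightarrow> f a \<le> support_fun f A"
  unfolding support_fun_def by (rule cSUP_upper[OF _ sf_bdd])

lemma sf_least: "A \<noteq> {} \<Longrightarrow> (\<And>a. a \<in> A \<Longrightarrow> f a \<le> e) \<Longrightarrow> support_fun f A \<le> e"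
  unfolding support_fun_def by (rule cSUP_least)

lemma sf_hex:
  assumes f: "dominated f k c" and A: "bnd A" "A \<noteq> {}" and B: "bnd B" "B \<noteq> {}"
  shows "support_fun f A \<le> support_fun f B + c * hexcess p k A B"
proof (rule sf_least[OF A(2)])
  fix a assume a: "a \<in> A"
  have lin: "linear f" and c: "c > 0" and dom: "\<And>x. \<bar>f x\<bar> \<le> c * p k x"
    using f unfolding dominated_def by auto
  have "(f a - support_fun f B) / c \<le> pd k a B"
    unfolding pd_def
  proof (rule cINF_greatest[OF B(2)])
    fix b assume b: "b \<in> B"
    have "f a = f b + f (a - b)" using linear_diff[OF lin] by simp
    also have "f b \<le> support_fun f B" by (rule sf_upper[OF f B(1) b])
    also have "f (a - b) \<le> c * p k (a - b)" using dom by (metis abs_le_D1)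
    finally show "(f a - support_fun f B) / c \<le> p k (a - b)" using c by (simp add: field_simps)
  qed
  also have "\<dots> \<le> hexcess p k A B" by (rule hex_upper[OF A(1) B(2) a])
  finally show "f a \<le> support_fun f B + c * hexcess p k A B" using c by (simp add: field_simps)
qed

lemma sf_haus:
  assumes f: "dominated f k c" and A: "bnd A" "A \<noteq> {}" and B: "bnd B" "B \<noteq> {}"
  shows "\<bar>support_fun f A - support_fun f B\<bar> \<le> c * hausdorff p k A B"
proof -
  have c: "c > 0" using f unfolding dominated_def by auto
  have "hexcess p k A B \<le> hausdorff p k A B" "hexcess p k B A \<le> hausdorff p k A B"
    unfolding hausdorff_def by auto
  then show ?thesis using sf_hex[OF f A B] sf_hex[OF f B A] c
    by (smt (verit, best) mult_left_mono)
qed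

lemma sep_pd:
  assumes B: "bnd B" "B \<noteq> {}" "convex B"
  shows "\<exists>f. linear f \<and> (\<forall>x. f x \<le> p i x) \<and> support_fun f B \<le> f a - pd i a B"
proof -
  define d where "d = pd i a B"
  have dle: "d \<le> p i (b - a)" if "b \<in> B" for b using pd_le[OF that, of i a] pcomm d_def by simp
  define T where "T y = {p i (y - s *\<^sub>R (b - a)) - s * d | s b. s \<ge> 0 \<and> b \<in> B}" for y
  define r where "r y = Inf (T y)" for y
  obtain b0 where b0: "b0 \<in> B" using B(2) by blast
  have Tne: "T y \<noteq> {}" for y unfolding T_def using b0 by blast
  have Tlow: "- p i y \<le> z" if zT: "z \<in> T y" for y z
  proof -
    obtain s b where sb: "s \<ge> 0" "b \<in> B" "z = p i (y - s *\<^sub>R (b - a)) - s * d"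
      using zT unfolding T_def by blast
    have "s * d \<le> s * p i (b - a)" using dle[OF sb(2)] sb(1) by (simp add: mult_left_mono)
    also have "s * p i (b - a) = p i (s *\<^sub>R (b - a))" using hom sb(1) by simp
    also have "\<dots> \<le> p i y + p i (y - s *\<^sub>R (b - a))" using ptri[of i "s *\<^sub>R (b - a)" 0 y] pcomm[of i "s *\<^sub>R (b - a)" y]
      by simp
    finally show ?thesis using sb(3) by simp
  qed
  have Tbdd: "bdd_below (T y)" for y by (rule bdd_belowI[of _ "- p i y"]) (rule Tlow)
  have r_le: "r y \<le> p i (y - s *\<^sub>R (b - a)) - s * d" if sb: "s \<ge> 0" "b \<in> B" for y s b
  proof -
    have "p i (y - s *\<^sub>R (b - a)) - s * d \<in> T y" unfolding T_def using sb by blast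
    then show ?thesis unfolding r_def by (rule cInf_lower[OF _ Tbdd])
  qed
  have r_ge: "m \<le> r y" if H: "\<And>s b. s \<ge> 0 \<Longrightarrow> b \<in> B \<Longrightarrow> m \<le> p i (y - s *\<^sub>R (b - a)) - s * d" for m y
    unfolding r_def
  proof (rule cInf_greatest[OF Tne])
    fix z assume "z \<in> T y"
    then obtain s b where "s \<ge> 0" "b \<in> B" "z = p i (y - s *\<^sub>R (b - a)) - s * d"
      unfolding T_def by blast
    then show "m \<le> z" using H by simp
  qed
  have r_p: "r y \<le> p i y" for y using r_le[of 0 b0 y] b0 by simp
  have sub_r: "r (x + y) \<le> r x + r y" for x y
  proof -
    have key: "r (x + y) \<le> (p i (x - s1 *\<^sub>R (b1 - a)) - s1 * d) + (p i (y - s2 *\<^sub>R (b2 - a)) - s2 * d)"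
      if h: "s1 \<ge> 0" "b1 \<in> B" "s2 \<ge> 0" "b2 \<in> B" for s1 b1 s2 b2
    proof (cases "s1 + s2 = 0")
      case True
      then have "s1 = 0" "s2 = 0" using h by auto
      then show ?thesis using r_le[of 0 b1 "x + y"] h sub[of i x y] by simp
    next
      case False
      then have s: "s1 + s2 > 0" using h by auto
      define b where "b = (s1 / (s1 + s2)) *\<^sub>R b1 + (s2 / (s1 + s2)) *\<^sub>R b2"
      have bB: "b \<in> B" unfolding b_def
        using convexD[OF B(3) h(2) h(4), of "s1 / (s1 + s2)" "s2 / (s1 + s2)"] h s
        by (simp add: add_divide_distrib[symmetric])
      have eqb: "(s1 + s2) *\<^sub>R b = s1 *\<^sub>R b1 + s2 *\<^sub>R b2"
        unfolding b_def using s by (simp add: scaleR_add_right)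
      have eq: "(s1 + s2) *\<^sub>R (b - a) = s1 *\<^sub>R (b1 - a) + s2 *\<^sub>R (b2 - a)"
        using eqb by (simp add: scaleR_diff_right scaleR_add_left algebra_simps)
      have "r (x + y) \<le> p i ((x + y) - (s1 + s2) *\<^sub>R (b - a)) - (s1 + s2) * d"
        by (rule r_le[OF _ bB]) (use s in simp)
      also have "(x + y) - (s1 + s2) *\<^sub>R (b - a) = (x - s1 *\<^sub>R (b1 - a)) + (y - s2 *\<^sub>R (b2 - a))"
        unfolding eq by (simp add: algebra_simps)
      finally show ?thesis using sub[of i "x - s1 *\<^sub>R (b1 - a)" "y - s2 *\<^sub>R (b2 - a)"]
        by (simp add: algebra_simps)
    qed
    have "r (x + y) - r y \<le> r x"
    proof (rule r_ge)
      fix s1 b1 assume h1: "(s1::real) \<ge> 0" "b1 \<in> B"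
      have "r (x + y) - (p i (x - s1 *\<^sub>R (b1 - a)) - s1 * d) \<le> r y"
        by (rule r_ge) (use key h1 in force)
      then show "r (x + y) - r y \<le> p i (x - s1 *\<^sub>R (b1 - a)) - s1 * d" by simp
    qed
    then show ?thesis by simp
  qed
  have r0: "r 0 = 0"
  proof (rule antisym)
    show "r 0 \<le> 0" using r_le[of 0 b0 0] b0 by simp
    show "0 \<le> r 0"
    proof (rule r_ge)
      fix s b assume h: "(s::real) \<ge> 0" "b \<in> B"
      have "s * d \<le> s * p i (b - a)" using dle[OF h(2)] h(1) by (simp add: mult_left_mono)
      also have "\<dots> = p i (0 - s *\<^sub>R (b - a))" using hom[of i "-s"] h(1) by simp
      finally show "0 \<le> p i (0 - s *\<^sub>R (b - a)) - s * d" by simp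
    qed
  qed
  have hom_r: "r (c *\<^sub>R y) = c * r y" if c: "c \<ge> 0" for c y
  proof (cases "c = 0")
    case True then show ?thesis using r0 by simp
  next
    case False
    then have c: "c > 0" using c by simp
    show ?thesis
    proof (rule antisym)
      have "r (c *\<^sub>R y) / c \<le> r y"
      proof (rule r_ge)
        fix s b assume h: "(s::real) \<ge> 0" "b \<in> B"
        have "r (c *\<^sub>R y) \<le> p i (c *\<^sub>R y - (c * s) *\<^sub>R (b - a)) - (c * s) * d"
          by (rule r_le[OF _ h(2)]) (use h c in simp)
        also have "c *\<^sub>R y - (c * s) *\<^sub>R (b - a) = c *\<^sub>R (y - s *\<^sub>R (b - a))" by (simp add: algebra_simps)
        also have "p i \<dots> = c * p i (y - s *\<^sub>R (b - a))" using hom c by simp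
        finally show "r (c *\<^sub>R y) / c \<le> p i (y - s *\<^sub>R (b - a)) - s * d" using c
          by (simp add: field_simps)
      qed
      then show "r (c *\<^sub>R y) \<le> c * r y" using c by (simp add: field_simps)
    next
      have "c * r y \<le> r (c *\<^sub>R y)"
      proof (rule r_ge)
        fix s b assume h: "(s::real) \<ge> 0" "b \<in> B"
        have "r y \<le> p i (y - (s / c) *\<^sub>R (b - a)) - (s / c) * d"
          by (rule r_le[OF _ h(2)]) (use h c in simp)
        also have "y - (s / c) *\<^sub>R (b - a) = (1 / c) *\<^sub>R (c *\<^sub>R y - s *\<^sub>R (b - a))"
          using c by (simp add: algebra_simps)
        also have "p i \<dots> = (1 / c) * p i (c *\<^sub>R y - s *\<^sub>R (b - a))" using hom c by simp
        finally show "c * r y \<le> p i (c *\<^sub>R y - s *\<^sub>R (b - a)) - s * d" using c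
          by (simp add: field_simps)
      qed
      then show "c * r y \<le> r (c *\<^sub>R y)" .
    qed
  qed
  obtain f where f: "linear f" "\<forall>x. f x \<le> r x"
    using hahn_banach_sublinear[of r] sub_r hom_r by blast
  have "support_fun f B \<le> f a - d"
  proof (rule sf_least[OF B(2)])
    fix b assume b: "b \<in> B"
    have "f (b - a) \<le> r (b - a)" using f by blast
    also have "\<dots> \<le> p i ((b - a) - 1 *\<^sub>R (b - a)) - 1 * d" by (rule r_le[OF _ b]) simp
    finally have "f (b - a) \<le> - d" by simp
    then show "f b \<le> f a - d" using linear_diff[OF f(1)] by simp
  qed
  moreover have "\<forall>x. f x \<le> p i x" using f r_p by (meson order_trans)
  ultimately show ?thesis using f d_def by blast
qed

lemma dominated_Fi: "linear f \<Longrightarrow> (\<forall>x. f x \<le> p i x) \<Longrightarrow> dominated f i 1"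
  unfolding dominated_def
proof (intro conjI allI)
  fix x assume "linear f" "\<forall>x. f x \<le> p i x"
  then have "f x \<le> p i x" "- f x \<le> p i x" using linear_neg[of f x] pminus[of i x] by (metis, metis)
  then show "\<bar>f x\<bar> \<le> 1 * p i x" by simp
qed auto

lemma haus_le:
  assumes A: "bnd A" "A \<noteq> {}" "convex A" and B: "bnd B" "B \<noteq> {}" "convex B"
    and H: "\<And>f. linear f \<Longrightarrow> (\<forall>x. f x \<le> p i x) \<Longrightarrow> \<bar>support_fun f A - support_fun f B\<bar> \<le> e"
  shows "hausdorff p i A B \<le> e"
proof -
  have 1: "hexcess p i X Y \<le> e" if X: "bnd X" "X \<noteq> {}" and Y: "bnd Y" "Y \<noteq> {}" "convex Y"
    and HH: "\<And>f. linear f \<Longrightarrow> (\<forall>x. f x \<le> p i x) \<Longrightarrow> support_fun f X - support_fun f Y \<le> e" for X Y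
  proof (rule hex_least[OF X(2)])
    fix a assume a: "a \<in> X"
    obtain f where f: "linear f" "\<forall>x. f x \<le> p i x" "support_fun f Y \<le> f a - pd i a Y"
      using sep_pd[OF Y] by blast
    have "f a \<le> support_fun f X" by (rule sf_upper[OF dominated_Fi[OF f(1,2)] X(1) a])
    then show "pd i a Y \<le> e" using f(3) HH[OF f(1,2)] by linarith
  qed
  have "hexcess p i A B \<le> e" by (rule 1[OF A(1,2) B]) (use H in force)
  moreover have "hexcess p i B A \<le> e" by (rule 1[OF B(1,2) A]) (use H in force)
  ultimately show ?thesis unfolding hausdorff_def by simp
qed

lemma dual_dominated:
  assumes "f \<in> dual_space p" shows "\<exists>k c. dominated f k c"
proof -
  have lin: "linear f" and cont: "continuous_map (seminorm_topology p) euclideanreal f"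
    using assms unfolding dual_space_def by auto
  have "openin (seminorm_topology p) {x \<in> topspace (seminorm_topology p). f x \<in> {-1<..<1}}"
    using cont unfolding continuous_map_def by (meson open_greaterThanLessThan open_openin)
  then have op: "openin (seminorm_topology p) {x. \<bar>f x\<bar> < 1}" by (simp add: abs_less_iff conj_commute)
  have "f 0 = 0" using linear_0[OF lin] .
  then have "0 \<in> {x. \<bar>f x\<bar> < 1}" by simp
  then have "\<exists>i e. 0 < e \<and> pball i 0 e \<subseteq> {x. \<bar>f x\<bar> < 1}"
    by (rule bspec[OF op[unfolded openin_P]])
  then obtain k e where ke: "0 < e" "pball k 0 e \<subseteq> {x. \<bar>f x\<bar> < 1}"
    by blast
  have small: "\<bar>f x\<bar> < 1" if pk: "p k x < e" for x using ke pk by (auto simp: pball_def)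
  have "\<bar>f x\<bar> \<le> (2 / e) * p k x" for x
  proof (cases "p k x = 0")
    case True
    have "f x = 0"
    proof (rule ccontr)
      assume nz: "f x \<noteq> 0"
      have "p k ((2 / \<bar>f x\<bar>) *\<^sub>R x) = 0" using hom True by simp
      then have "\<bar>f ((2 / \<bar>f x\<bar>) *\<^sub>R x)\<bar> < 1" using small ke by simp
      moreover have "f ((2 / \<bar>f x\<bar>) *\<^sub>R x) = (2 / \<bar>f x\<bar>) * f x" using linear_scale[OF lin] by simp
      ultimately show False using nz by (simp add: abs_mult)
    qed
    then show ?thesis using ke(1) by simp
  next
    case False
    then have pos: "p k x > 0" using nonneg[of k x] by linarith
    define t where "t = e / (2 * p k x)"
    have t: "t > 0" using pos ke by (simp add: t_def)
    have "p k (t *\<^sub>R x) = e / 2" using hom[of k t x] t pos ke(1) by (simp add: t_def)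
    then have "\<bar>f (t *\<^sub>R x)\<bar> < 1" using small ke by simp
    moreover have "f (t *\<^sub>R x) = t * f x" using linear_scale[OF lin] by simp
    ultimately have "t * \<bar>f x\<bar> < 1" using t by (simp add: abs_mult)
    then show ?thesis using pos ke by (simp add: t_def field_simps)
  qed
  then have "dominated f k (2 / e)" unfolding dominated_def using lin ke by simp
  then show ?thesis by blast
qed

lemma dominated_dual:
  assumes "dominated f k c" shows "f \<in> dual_space p"
proof -
  have lin: "linear f" and c: "c > 0" and dom: "\<And>x. \<bar>f x\<bar> \<le> c * p k x"
    using assms unfolding dominated_def by auto
  have "continuous_map (seminorm_topology p) euclideanreal f"
    unfolding continuous_map_def
  proof (intro conjI allI impI)
    show "f \<in> topspace (seminorm_topology p) \<rightarrow> topspace euclideanreal" by simp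
  next
    fix U assume "openin euclideanreal U"
    then have U: "open U" by simp
    show "openin (seminorm_topology p) {x \<in> topspace (seminorm_topology p). f x \<in> U}"
      unfolding openin_P
    proof
      fix x assume "x \<in> {x \<in> topspace (seminorm_topology p). f x \<in> U}"
      then have fx: "f x \<in> U" by simp
      then obtain r where r: "r > 0" "ball (f x) r \<subseteq> U" using U open_contains_ball by blast
      have "pball k x (r / c) \<subseteq> {x \<in> topspace (seminorm_topology p). f x \<in> U}"
      proof
        fix y assume "y \<in> pball k x (r / c)"
        then have "c * p k (y - x) < r" using c by (simp add: pball_def field_simps)
        moreover have "\<bar>f y - f x\<bar> \<le> c * p k (y - x)" using dom[of "y - x"] linear_diff[OF lin] by simp
        ultimately have "dist (f y) (f x) < r" by (simp add: dist_real_def)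
        then show "y \<in> {x \<in> topspace (seminorm_topology p). f x \<in> U}" using r by (auto simp: dist_commute)
      qed
      then show "\<exists>i e. 0 < e \<and> pball i x e \<subseteq> {x \<in> topspace (seminorm_topology p). f x \<in> U}"
        using r c by (intro exI[of _ k] exI[of _ "r / c"]) simp
    qed
  qed
  then show ?thesis using lin unfolding dual_space_def by simp
qed

end


context fre begin

definition G :: "(real set \<Rightarrow> real) \<Rightarrow> (real set \<times> 'a set) list \<Rightarrow> 'a set" where
  "G w S = foldr (\<lambda>(A, C) B. msum ((\<lambda>x. w A *\<^sub>R x) ` C) B) S {0}"

definition sfs :: "('a \<Rightarrow> real) \<Rightarrow> (real set \<Rightarrow> real) \<Rightarrow> (real set \<times> 'a set) list \<Rightarrow> real" where
  "sfs f w S = foldr (\<lambda>(A, C) acc. w A * support_fun f C + acc) S 0"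

lemma G_Nil[simp]: "G w [] = {0}" by (simp add: G_def)
lemma G_Cons[simp]: "G w ((A, C) # S) = msum ((\<lambda>x. w A *\<^sub>R x) ` C) (G w S)" by (simp add: G_def)
lemma sfs_Nil[simp]: "sfs f w [] = 0" by (simp add: sfs_def)
lemma sfs_Cons[simp]: "sfs f w ((A, C) # S) = w A * support_fun f C + sfs f w S" by (simp add: sfs_def)

lemma mf_eval_G: "mf_eval S t = G (\<lambda>A. indicator A t) S"
  unfolding mf_eval_def G_def ..

lemma simple_int_G: "simple_int p S E = seminorm_topology p closure_of G (\<lambda>A. measure lebesgue (A \<inter> E)) S"
  unfolding simple_int_def G_def ..

definition good :: "'a set \<Rightarrow> bool" where
  "good C \<longleftrightarrow> C \<noteq> {} \<and> bnd C \<and> convex C \<and> ptb C"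

lemma ptb_bnd: "ptb S \<Longrightarrow> bnd S"
  unfolding bnd_def using ptb_bounded by blast

lemma ck_good: "C \<in> ck p \<Longrightarrow> good C"
  unfolding ck_def good_def using compact_ptb ptb_bnd by blast

lemma good_zero: "good {0}"
  unfolding good_def bnd_def ptb_def
proof (intro conjI allI impI)
  fix i and e :: real assume "e > 0"
  then show "\<exists>F. finite F \<and> F \<subseteq> {0} \<and> (\<forall>y\<in>{0}. \<exists>x\<in>F. p i (y - x) < e)"
    by (intro exI[of _ "{0}"]) simp
qed auto

lemma msum_good: assumes X: "good X" and Y: "good Y" shows "good (msum X Y)"
  unfolding good_def
proof (intro conjI)
  show "msum X Y \<noteq> {}" using X Y unfolding good_def msum_def by blast
  show "bnd (msum X Y)" unfolding bnd_def
  proof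
    fix i
    obtain M1 where M1: "\<forall>x\<in>X. p i x \<le> M1" using X unfolding good_def bnd_def by blast
    obtain M2 where M2: "\<forall>x\<in>Y. p i x \<le> M2" using Y unfolding good_def bnd_def by blast
    have "\<forall>z\<in>msum X Y. p i z \<le> M1 + M2"
    proof
      fix z assume "z \<in> msum X Y"
      then obtain x y where "x \<in> X" "y \<in> Y" "z = x + y" unfolding msum_def by blast
      then show "p i z \<le> M1 + M2" using M1 M2 sub[of i x y] by fastforce
    qed
    then show "\<exists>M. \<forall>z\<in>msum X Y. p i z \<le> M" by blast
  qed
  have "msum X Y = (\<Union>x\<in> X. \<Union>y \<in> Y. {x + y})" unfolding msum_def by blast
  then show "convex (msum X Y)" using convex_sums X Y unfolding good_def by metis
  show "ptb (msum X Y)" unfolding ptb_def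
  proof (intro allI impI)
    fix i and e :: real assume e: "e > 0"
    obtain F1 where F1: "finite F1" "F1 \<subseteq> X" "\<forall>y\<in>X. \<exists>x\<in>F1. p i (y - x) < e/2"
      using ptbD[of X "e/2" i] X e unfolding good_def by auto
    obtain F2 where F2: "finite F2" "F2 \<subseteq> Y" "\<forall>y\<in>Y. \<exists>x\<in>F2. p i (y - x) < e/2"
      using ptbD[of Y "e/2" i] Y e unfolding good_def by auto
    define F where "F = (\<lambda>(a, b). a + b) ` (F1 \<times> F2)"
    have "finite F" unfolding F_def using F1 F2 by simp
    moreover have "F \<subseteq> msum X Y" unfolding F_def msum_def using F1(2) F2(2) by fastforce
    moreover have "\<forall>z\<in>msum X Y. \<exists>w\<in>F. p i (z - w) < e"
    proof
      fix z assume "z \<in> msum X Y"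
      then obtain x y where xy: "x \<in> X" "y \<in> Y" "z = x + y" unfolding msum_def by blast
      obtain a where a: "a \<in> F1" "p i (x - a) < e/2" using F1 xy by blast
      obtain b where b: "b \<in> F2" "p i (y - b) < e/2" using F2 xy by blast
      have "p i (z - (a + b)) = p i ((x - a) + (y - b))" using xy by (simp add: algebra_simps)
      then have "p i (z - (a + b)) < e" using sub[of i "x - a" "y - b"] a b by linarith
      moreover have "a + b \<in> F" unfolding F_def using a b by force
      ultimately show "\<exists>w\<in>F. p i (z - w) < e" by blast
    qed
    ultimately show "\<exists>F. finite F \<and> F \<subseteq> msum X Y \<and> (\<forall>y\<in>msum X Y. \<exists>x\<in>F. p i (y - x) < e)"
      by blast
  qed
qed

lemma scale_good: assumes C: "good C" shows "good ((\<lambda>x. t *\<^sub>R x) ` C)"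
  unfolding good_def
proof (intro conjI)
  show "(\<lambda>x. t *\<^sub>R x) ` C \<noteq> {}" using C unfolding good_def by blast
  show "bnd ((\<lambda>x. t *\<^sub>R x) ` C)" unfolding bnd_def
  proof
    fix i
    obtain M where M: "\<forall>x\<in>C. p i x \<le> M" using C unfolding good_def bnd_def by blast
    have "\<forall>z\<in>(\<lambda>x. t *\<^sub>R x) ` C. p i z \<le> \<bar>t\<bar> * M"
      using M hom by (auto intro: mult_left_mono)
    then show "\<exists>M. \<forall>z\<in>(\<lambda>x. t *\<^sub>R x) ` C. p i z \<le> M" by blast
  qed
  show "convex ((\<lambda>x. t *\<^sub>R x) ` C)" using convex_scaling C unfolding good_def by blast
  show "ptb ((\<lambda>x. t *\<^sub>R x) ` C)" unfolding ptb_def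
  proof (intro allI impI)
    fix i and e :: real assume e: "e > 0"
    have e': "e / (\<bar>t\<bar> + 1) > 0" using e by simp
    obtain F where F: "finite F" "F \<subseteq> C" "\<forall>y\<in>C. \<exists>x\<in>F. p i (y - x) < e / (\<bar>t\<bar> + 1)"
      using ptbD[OF _ e', of C i] C unfolding good_def by auto
    have "\<forall>z\<in>(\<lambda>x. t *\<^sub>R x) ` C. \<exists>w\<in>(\<lambda>x. t *\<^sub>R x) ` F. p i (z - w) < e"
    proof
      fix z assume "z \<in> (\<lambda>x. t *\<^sub>R x) ` C"
      then obtain y where y: "y \<in> C" "z = t *\<^sub>R y" by blast
      obtain x where x: "x \<in> F" "p i (y - x) < e / (\<bar>t\<bar> + 1)" using F y by blast
      have "p i (z - t *\<^sub>R x) = \<bar>t\<bar> * p i (y - x)" using y hom[of i t "y - x"] by (simp add: scaleR_diff_right)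
      also have "\<dots> \<le> \<bar>t\<bar> * (e / (\<bar>t\<bar> + 1))" using x(2) by (intro mult_left_mono) auto
      also have "\<dots> < e" using e by (simp add: field_simps)
      finally show "\<exists>w\<in>(\<lambda>x. t *\<^sub>R x) ` F. p i (z - w) < e" using x by blast
    qed
    then show "\<exists>F'. finite F' \<and> F' \<subseteq> (\<lambda>x. t *\<^sub>R x) ` C \<and> (\<forall>y\<in>(\<lambda>x. t *\<^sub>R x) ` C. \<exists>x\<in>F'. p i (y - x) < e)"
      using F by (intro exI[of _ "(\<lambda>x. t *\<^sub>R x) ` F"]) auto
  qed
qed

lemma good_bnd: "good C \<Longrightarrow> bnd C" and good_ne: "good C \<Longrightarrow> C \<noteq> {}"
  and good_convex: "good C \<Longrightarrow> convex C" and good_ptb: "good C \<Longrightarrow> ptb C"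
  unfolding good_def by auto

lemma sf_msum:
  assumes f: "dominated f k c" and X: "good X" and Y: "good Y"
  shows "support_fun f (msum X Y) = support_fun f X + support_fun f Y"
proof (rule antisym)
  have lin: "linear f" using f unfolding dominated_def by auto
  show "support_fun f (msum X Y) \<le> support_fun f X + support_fun f Y"
  proof (rule sf_least)
    show "msum X Y \<noteq> {}" using good_ne[OF msum_good[OF X Y]] .
    fix z assume "z \<in> msum X Y"
    then obtain x y where xy: "x \<in> X" "y \<in> Y" "z = x + y" unfolding msum_def by blast
    have "f z = f x + f y" using xy linear_add[OF lin] by simp
    also have "\<dots> \<le> support_fun f X + support_fun f Y"
      using sf_upper[OF f good_bnd[OF X] xy(1)] sf_upper[OF f good_bnd[OF Y] xy(2)] by simp
    finally show "f z \<le> support_fun f X + support_fun f Y" .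
  qed
  have "support_fun f X \<le> support_fun f (msum X Y) - support_fun f Y"
  proof (rule sf_least[OF good_ne[OF X]])
    fix x assume x: "x \<in> X"
    have "support_fun f Y \<le> support_fun f (msum X Y) - f x"
    proof (rule sf_least[OF good_ne[OF Y]])
      fix y assume y: "y \<in> Y"
      have "x + y \<in> msum X Y" using x y unfolding msum_def by blast
      then have "f (x + y) \<le> support_fun f (msum X Y)" by (rule sf_upper[OF f good_bnd[OF msum_good[OF X Y]]])
      then show "f y \<le> support_fun f (msum X Y) - f x" using linear_add[OF lin] by simp
    qed
    then show "f x \<le> support_fun f (msum X Y) - support_fun f Y" by simp
  qed
  then show "support_fun f X + support_fun f Y \<le> support_fun f (msum X Y)" by simp
qed

lemma sf_scale:
  assumes f: "dominated f k c" and C: "good C" and t: "t \<ge> 0"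
  shows "support_fun f ((\<lambda>x. t *\<^sub>R x) ` C) = t * support_fun f C"
proof (cases "t = 0")
  case True
  have lin: "linear f" using f unfolding dominated_def by auto
  have "(\<lambda>x. t *\<^sub>R x) ` C = {0}" using True good_ne[OF C] by auto
  then show ?thesis using True linear_0[OF lin] by (simp add: support_fun_def)
next
  case False
  then have t: "t > 0" using t by simp
  have lin: "linear f" using f unfolding dominated_def by auto
  have bd: "bnd ((\<lambda>x. t *\<^sub>R x) ` C)" using good_bnd[OF scale_good[OF C]] .
  show ?thesis
  proof (rule antisym)
    show "support_fun f ((\<lambda>x. t *\<^sub>R x) ` C) \<le> t * support_fun f C"
    proof (rule sf_least)
      show "(\<lambda>x. t *\<^sub>R x) ` C \<noteq> {}" using good_ne[OF C] by blast
      fix z assume "z \<in> (\<lambda>x. t *\<^sub>R x) ` C"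
      then obtain x where x: "x \<in> C" "z = t *\<^sub>R x" by blast
      have "f z = t * f x" using x linear_scale[OF lin] by simp
      also have "\<dots> \<le> t * support_fun f C" using sf_upper[OF f good_bnd[OF C] x(1)] t by simp
      finally show "f z \<le> t * support_fun f C" .
    qed
    have "support_fun f C \<le> support_fun f ((\<lambda>x. t *\<^sub>R x) ` C) / t"
    proof (rule sf_least[OF good_ne[OF C]])
      fix x assume x: "x \<in> C"
      have "f (t *\<^sub>R x) \<le> support_fun f ((\<lambda>x. t *\<^sub>R x) ` C)" using x by (intro sf_upper[OF f bd]) auto
      then show "f x \<le> support_fun f ((\<lambda>x. t *\<^sub>R x) ` C) / t" using t linear_scale[OF lin]
        by (simp add: field_simps)
    qed
    then show "t * support_fun f C \<le> support_fun f ((\<lambda>x. t *\<^sub>R x) ` C)" using t by (simp add: field_simps)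
  qed
qed

lemma G_good: "(\<forall>AC\<in>set S. good (snd AC)) \<Longrightarrow> good (G w S)"
proof (induction S)
  case Nil then show ?case using good_zero by simp
next
  case (Cons AC S)
  obtain A C where AC: "AC = (A, C)" by (cases AC)
  show ?case using Cons AC by (simp add: msum_good scale_good)
qed

lemma sf_G: "dominated f k c \<Longrightarrow> (\<forall>AC\<in>set S. good (snd AC)) \<Longrightarrow> (\<forall>A. w A \<ge> 0)
   \<Longrightarrow> support_fun f (G w S) = sfs f w S"
proof (induction S)
  case Nil
  then have "linear f" unfolding dominated_def by auto
  then show ?case using linear_0 by (simp add: support_fun_def)
next
  case (Cons AC S)
  obtain A C where AC: "AC = (A, C)" by (cases AC)
  have C: "good C" and S: "\<forall>AC\<in>set S. good (snd AC)" using Cons.prems AC by auto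
  have "support_fun f (G w (AC # S)) = support_fun f ((\<lambda>x. w A *\<^sub>R x) ` C) + support_fun f (G w S)"
    using AC sf_msum[OF Cons.prems(1) scale_good[OF C] G_good[OF S]] by simp
  also have "\<dots> = w A * support_fun f C + sfs f w S"
    using sf_scale[OF Cons.prems(1) C] Cons.prems(3) Cons.IH[OF Cons.prems(1) S Cons.prems(3)] by simp
  finally show ?case using AC by simp
qed

lemma closure_good: assumes X: "good X" shows "good (seminorm_topology p closure_of X)"
  (is "good ?Y")
proof -
  have XY: "X \<subseteq> ?Y" by (rule closure_of_subset) simp
  have near: "\<exists>x\<in>X. p i (y - x) < e" if "y \<in> ?Y" "e > 0" for y i e
    using that closure_P by blast
  show ?thesis unfolding good_def
  proof (intro conjI)
    show "?Y \<noteq> {}" using XY good_ne[OF X] by blast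
    show "bnd ?Y" unfolding bnd_def
    proof
      fix i
      obtain M where M: "\<forall>x\<in>X. p i x \<le> M" using good_bnd[OF X] unfolding bnd_def by blast
      have "\<forall>y\<in>?Y. p i y \<le> 1 + M"
      proof
        fix y assume "y \<in> ?Y"
        then obtain x where x: "x \<in> X" "p i (y - x) < 1" using near[of y 1 i] by auto
        then show "p i y \<le> 1 + M" using sub[of i "y - x" x] M by fastforce
      qed
      then show "\<exists>M. \<forall>y\<in>?Y. p i y \<le> M" by blast
    qed
    show "convex ?Y" unfolding convex_def
    proof (intro ballI allI impI)
      fix y1 y2 and u v :: real assume y: "y1 \<in> ?Y" "y2 \<in> ?Y" and uv: "0 \<le> u" "0 \<le> v" "u + v = 1"
      have "\<forall>i e. e > 0 \<longrightarrow> (\<exists>c\<in>X. p i (u *\<^sub>R y1 + v *\<^sub>R y2 - c) < e)"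
      proof (intro allI impI)
        fix i and e :: real assume e: "e > 0"
        obtain x1 where x1: "x1 \<in> X" "p i (y1 - x1) < e" using near[OF y(1) e] by blast
        obtain x2 where x2: "x2 \<in> X" "p i (y2 - x2) < e" using near[OF y(2) e] by blast
        have c: "u *\<^sub>R x1 + v *\<^sub>R x2 \<in> X" using convexD[OF good_convex[OF X] x1(1) x2(1) uv] .
        have "u *\<^sub>R y1 + v *\<^sub>R y2 - (u *\<^sub>R x1 + v *\<^sub>R x2) = u *\<^sub>R (y1 - x1) + v *\<^sub>R (y2 - x2)"
          by (simp add: algebra_simps)
        then have "p i (u *\<^sub>R y1 + v *\<^sub>R y2 - (u *\<^sub>R x1 + v *\<^sub>R x2)) \<le> u * p i (y1 - x1) + v * p i (y2 - x2)"
          using sub[of i "u *\<^sub>R (y1 - x1)" "v *\<^sub>R (y2 - x2)"] hom uv by simp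
        also have "\<dots> < e"
        proof -
          have "u * p i (y1 - x1) \<le> u * e" "v * p i (y2 - x2) \<le> v * e"
            using x1 x2 uv by (auto intro: mult_left_mono)
          moreover have "u * p i (y1 - x1) < u * e \<or> v * p i (y2 - x2) < v * e"
            using x1 x2 uv by (cases "u = 0") auto
          ultimately have "u * p i (y1 - x1) + v * p i (y2 - x2) < u * e + v * e" by linarith
          also have "\<dots> = (u + v) * e" by (simp add: algebra_simps)
          also have "\<dots> = e" using uv by simp
          finally show ?thesis .
        qed
        finally show "\<exists>c\<in>X. p i (u *\<^sub>R y1 + v *\<^sub>R y2 - c) < e" using c by blast
      qed
      then show "u *\<^sub>R y1 + v *\<^sub>R y2 \<in> ?Y" unfolding closure_P .
    qed
    show "ptb ?Y" unfolding ptb_def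
    proof (intro allI impI)
      fix i and e :: real assume e: "e > 0"
      obtain F where F: "finite F" "F \<subseteq> X" "\<forall>y\<in>X. \<exists>x\<in>F. p i (y - x) < e/2"
        using ptbD[of X "e/2" i] good_ptb[OF X] e by auto
      have "\<forall>y\<in>?Y. \<exists>x\<in>F. p i (y - x) < e"
      proof
        fix y assume "y \<in> ?Y"
        then obtain x where x: "x \<in> X" "p i (y - x) < e/2" using near[of y "e/2" i] e by auto
        obtain z where z: "z \<in> F" "p i (x - z) < e/2" using F x by blast
        have "p i (y - z) \<le> p i (y - x) + p i (x - z)" by (rule ptri)
        then show "\<exists>x\<in>F. p i (y - x) < e" using x z by (intro bexI[of _ z]) auto
      qed
      then show "\<exists>F. finite F \<and> F \<subseteq> ?Y \<and> (\<forall>y\<in>?Y. \<exists>x\<in>F. p i (y - x) < e)"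
        using F XY by blast
    qed
  qed
qed

lemma sf_closure:
  assumes f: "dominated f k c" and X: "good X"
  shows "support_fun f (seminorm_topology p closure_of X) = support_fun f X" (is "support_fun f ?Y = _")
proof (rule antisym)
  have lin: "linear f" and c: "c > 0" and dom: "\<And>x. \<bar>f x\<bar> \<le> c * p k x"
    using f unfolding dominated_def by auto
  have XY: "X \<subseteq> ?Y" by (rule closure_of_subset) simp
  show "support_fun f ?Y \<le> support_fun f X"
  proof (rule sf_least)
    show "?Y \<noteq> {}" using XY good_ne[OF X] by blast
    fix y assume y: "y \<in> ?Y"
    have "f y \<le> support_fun f X + e" if e: "e > 0" for e
    proof -
      obtain x where x: "x \<in> X" "p k (y - x) < e / c" using y e c closure_P by (meson divide_pos_pos)
      have "f y = f x + f (y - x)" using linear_diff[OF lin] by simp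
      also have "f (y - x) \<le> c * p k (y - x)" using dom by (metis abs_le_D1)
      also have "c * p k (y - x) < e" using x c by (simp add: field_simps)
      finally show ?thesis using sf_upper[OF f good_bnd[OF X] x(1)] by simp
    qed
    then show "f y \<le> support_fun f X" by (rule field_le_epsilon)
  qed
  show "support_fun f X \<le> support_fun f ?Y"
  proof (rule sf_least[OF good_ne[OF X]])
    fix x assume "x \<in> X"
    then show "f x \<le> support_fun f ?Y" using XY by (intro sf_upper[OF f good_bnd[OF closure_good[OF X]]]) auto
  qed
qed

end


context fre begin

lemma conv_lt: "0 \<le> u \<Longrightarrow> 0 \<le> v \<Longrightarrow> u + v = 1 \<Longrightarrow> (a::real) < e \<Longrightarrow> b < e \<Longrightarrow> u * a + v * b < e"
proof -
  assume uv: "0 \<le> u" "0 \<le> v" "u + v = 1" and ab: "a < e" "b < e"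
  have "u * a \<le> u * e" "v * b \<le> v * e" using uv ab by (auto intro: mult_left_mono)
  moreover have "u * a < u * e \<or> v * b < v * e" using uv ab by (cases "u = 0") auto
  ultimately have "u * a + v * b < u * e + v * e" by linarith
  also have "\<dots> = (u + v) * e" by (simp add: algebra_simps)
  finally show ?thesis using uv by simp
qed

lemma tend0I: "(\<And>e. e > 0 \<Longrightarrow> eventually (\<lambda>n. 0 \<le> x n \<and> x n < e) sequentially) \<Longrightarrow> x \<longlonglongrightarrow> (0::real)"
proof (rule tendstoI)
  fix e :: real assume H: "\<And>e. e > 0 \<Longrightarrow> eventually (\<lambda>n. 0 \<le> x n \<and> x n < e) sequentially" and e: "e > 0"
  show "eventually (\<lambda>n. dist (x n) 0 < e) sequentially"
    using H[OF e] by eventually_elim (simp add: dist_real_def)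
qed

lemma pd_mono_i: "i \<le> j \<Longrightarrow> B \<noteq> {} \<Longrightarrow> pd i y B \<le> pd j y B"
  unfolding pd_def[of j]
proof (rule cINF_greatest)
  fix b assume "i \<le> j" "b \<in> B"
  then show "pd i y B \<le> p j (y - b)" using pd_le[of b B i y] pmono[of i j "y - b"] by linarith
qed

lemma hex_mono_i: "i \<le> j \<Longrightarrow> bnd A \<Longrightarrow> A \<noteq> {} \<Longrightarrow> B \<noteq> {} \<Longrightarrow> hexcess p i A B \<le> hexcess p j A B"
proof (rule hex_least)
  fix a assume "i \<le> j" "bnd A" "A \<noteq> {}" "B \<noteq> {}" "a \<in> A"
  then show "pd i a B \<le> hexcess p j A B" using pd_mono_i hex_upper by (meson order_trans)
qed

lemma haus_mono_i: "i \<le> j \<Longrightarrow> bnd A \<Longrightarrow> A \<noteq> {} \<Longrightarrow> bnd B \<Longrightarrow> B \<noteq> {} \<Longrightarrow> hausdorff p i A B \<le> hausdorff p j A B"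
  unfolding hausdorff_def using hex_mono_i by (meson max.mono)

lemma pd_tri: "B \<noteq> {} \<Longrightarrow> pd i y B \<le> p i (y - z) + pd i z B"
proof -
  assume B: "B \<noteq> {}"
  have "pd i y B - p i (y - z) \<le> pd i z B"
    unfolding pd_def[of i z]
  proof (rule cINF_greatest[OF B])
    fix b assume "b \<in> B"
    then show "pd i y B - p i (y - z) \<le> p i (z - b)" using pd_le[of b B i y] ptri[of i y b z] by linarith
  qed
  then show ?thesis by simp
qed

lemma pd_via: "bnd A \<Longrightarrow> A \<noteq> {} \<Longrightarrow> B \<noteq> {} \<Longrightarrow> pd i y B \<le> pd i y A + hexcess p i A B"
proof -
  assume A: "bnd A" "A \<noteq> {}" and B: "B \<noteq> {}"
  have "pd i y B - hexcess p i A B \<le> pd i y A"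
    unfolding pd_def[of i y A]
  proof (rule cINF_greatest[OF A(2)])
    fix a assume a: "a \<in> A"
    then show "pd i y B - hexcess p i A B \<le> p i (y - a)"
      using pd_tri[OF B, of i y a] hex_upper[OF A(1) B a, of i] by linarith
  qed
  then show ?thesis by simp
qed

lemma pd_lt: "B \<noteq> {} \<Longrightarrow> pd i y B < r \<Longrightarrow> \<exists>b\<in>B. p i (y - b) < r"
proof (rule ccontr)
  assume B: "B \<noteq> {}" and lt: "pd i y B < r" and "\<not> (\<exists>b\<in>B. p i (y - b) < r)"
  then have "\<forall>b\<in>B. r \<le> p i (y - b)" by (simp add: not_less)
  then have "r \<le> pd i y B" unfolding pd_def by (intro cINF_greatest[OF B]) auto
  then show False using lt by simp
qed

lemma hex_le_haus: "hexcess p i A B \<le> hausdorff p i A B" "hexcess p i B A \<le> hausdorff p i A B"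
  unfolding hausdorff_def by auto

lemma haus_nonneg: "bnd A \<Longrightarrow> A \<noteq> {} \<Longrightarrow> B \<noteq> {} \<Longrightarrow> 0 \<le> hausdorff p i A B"
  using hex_nonneg hex_le_haus by (meson order_trans)

lemma lim_exists:
  fixes C :: "nat \<Rightarrow> 'a set"
  assumes good: "\<And>n. good (C n)"
    and Cau: "\<And>i e. e > 0 \<Longrightarrow> \<exists>N. \<forall>n\<ge>N. \<forall>m\<ge>N. hausdorff p i (C n) (C m) < e"
  shows "\<exists>L. L \<in> ck p \<and> (\<forall>i. (\<lambda>n. hausdorff p i (C n) L) \<longlonglongrightarrow> 0)"
proof -
  have Cb: "bnd (C n)" and Cne: "C n \<noteq> {}" and Cc: "convex (C n)" and Cp: "ptb (C n)" for n
    using good[of n] unfolding good_def by auto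
  define Nf where "Nf j \<epsilon> = (SOME N. \<forall>n\<ge>N. \<forall>m\<ge>N. hausdorff p j (C n) (C m) < \<epsilon>)" for j \<epsilon>
  have Nf: "\<And>n m. n \<ge> Nf j \<epsilon> \<Longrightarrow> m \<ge> Nf j \<epsilon> \<Longrightarrow> hausdorff p j (C n) (C m) < \<epsilon>" if "\<epsilon> > 0" for j \<epsilon>
    using someI_ex[OF Cau[OF that, of j]] unfolding Nf_def by blast
  define L where "L = {y. \<forall>i. (\<lambda>n. pd i y (C n)) \<longlonglongrightarrow> 0}"
  have approx: "\<exists>Y\<in>L. p i (c - Y) \<le> 2 * e" if e: "e > 0" and n0: "n0 \<ge> Nf i e" and c: "c \<in> C n0" for i e n0 c
  proof -
    define tol where "tol k = e / 2 ^ k" for k :: nat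
    have tol_pos: "tol k > 0" for k using e by (simp add: tol_def)
    have tol_Suc: "tol (Suc k) = tol k / 2" for k by (simp add: tol_def)
    define m where "m = rec_nat n0 (\<lambda>k mk. max mk (Nf (i + Suc k) (tol (Suc k))))"
    have m0: "m 0 = n0" and mS: "m (Suc k) = max (m k) (Nf (i + Suc k) (tol (Suc k)))" for k
      by (simp_all add: m_def)
    have m_mono: "m k \<le> m k'" if "k \<le> k'" for k k'
      using that by (induction k' rule: dec_induct) (auto simp: mS)
    have mN: "m k \<ge> Nf (i + k) (tol k)" for k
    proof (cases k)
      case 0 then show ?thesis using n0 m0 by (simp add: tol_def)
    next
      case (Suc k') then show ?thesis by (simp add: mS)
    qed
    have mH: "hausdorff p (i + k) (C n) (C n') < tol k" if "n \<ge> m k" "n' \<ge> m k" for k n n'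
      using Nf[OF tol_pos[of k], of "i + k" n n'] mN[of k] that by linarith
    define y where "y = rec_nat c (\<lambda>k yk. SOME z. z \<in> C (m (Suc k)) \<and> p (i + k) (yk - z) < tol k)"
    have y0: "y 0 = c" and yS: "y (Suc k) = (SOME z. z \<in> C (m (Suc k)) \<and> p (i + k) (y k - z) < tol k)" for k
      by (simp_all add: y_def)
    have ystep: "y k \<in> C (m k) \<and> y (Suc k) \<in> C (m (Suc k)) \<and> p (i + k) (y k - y (Suc k)) < tol k" for k
    proof (induction k)
      case 0
      have ex: "\<exists>z. z \<in> C (m (Suc 0)) \<and> p (i + 0) (y 0 - z) < tol 0"
      proof -
        have "pd (i + 0) (y 0) (C (m (Suc 0))) \<le> hexcess p (i + 0) (C (m 0)) (C (m (Suc 0)))"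
          using hex_upper[OF Cb Cne, of "y 0" "m 0"] y0 c m0 by simp
        also have "\<dots> \<le> hausdorff p (i + 0) (C (m 0)) (C (m (Suc 0)))" by (rule hex_le_haus)
        also have "\<dots> < tol 0" by (rule mH) (auto intro: m_mono)
        finally show ?thesis using pd_lt[OF Cne] by blast
      qed
      have "y (Suc 0) \<in> C (m (Suc 0)) \<and> p (i + 0) (y 0 - y (Suc 0)) < tol 0"
        unfolding yS[of 0] by (rule someI_ex[OF ex])
      then show ?case using y0 c m0 by simp
    next
      case (Suc k)
      have yk: "y (Suc k) \<in> C (m (Suc k))" using Suc.IH by blast
      have ex: "\<exists>z. z \<in> C (m (Suc (Suc k))) \<and> p (i + Suc k) (y (Suc k) - z) < tol (Suc k)"
      proof -
        have "pd (i + Suc k) (y (Suc k)) (C (m (Suc (Suc k)))) \<le> hexcess p (i + Suc k) (C (m (Suc k))) (C (m (Suc (Suc k))))"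
          using hex_upper[OF Cb Cne yk] by simp
        also have "\<dots> \<le> hausdorff p (i + Suc k) (C (m (Suc k))) (C (m (Suc (Suc k))))" by (rule hex_le_haus)
        also have "\<dots> < tol (Suc k)" by (rule mH) (auto intro: m_mono)
        finally show ?thesis using pd_lt[OF Cne] by blast
      qed
      have "y (Suc (Suc k)) \<in> C (m (Suc (Suc k))) \<and> p (i + Suc k) (y (Suc k) - y (Suc (Suc k))) < tol (Suc k)"
        unfolding yS[of "Suc k"] by (rule someI_ex[OF ex])
      then show ?case using yk by blast
    qed
    have bound: "p l (y k - y (k + d)) \<le> 2 * tol k - 2 * tol (k + d)" if l: "l \<le> i + k" for l k d
    proof (induction d)
      case 0 then show ?case by simp
    next
      case (Suc d)
      have "p l (y k - y (k + Suc d)) \<le> p l (y k - y (k + d)) + p l (y (k + d) - y (Suc (k + d)))"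
        using ptri[of l "y k" "y (k + Suc d)" "y (k + d)"] by simp
      also have "p l (y (k + d) - y (Suc (k + d))) \<le> p (i + (k + d)) (y (k + d) - y (Suc (k + d)))"
        using l by (intro pmono) simp
      also have "\<dots> < tol (k + d)" using ystep[of "k + d"] by blast
      finally show ?case using Suc.IH tol_Suc[of "k + d"] by simp
    qed
    have bound2: "p l (y k - y k') \<le> 2 * tol k" if "l \<le> i + k" "k \<le> k'" for l k k'
      using bound[OF that(1), of "k' - k"] tol_pos[of k'] that(2) by simp
    have tol_small: "\<exists>K. \<forall>k\<ge>K. tol k < \<epsilon>" if epos: "\<epsilon> > 0" for \<epsilon>
    proof -
      obtain K where K: "(1/2::real)^K < \<epsilon> / e" using small_pow[of "\<epsilon> / e"] epos e by auto
      have "tol k < \<epsilon>" if "k \<ge> K" for k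
      proof -
        have "(1/2::real)^k \<le> (1/2)^K" using that by (intro power_decreasing) auto
        then have "(1/2::real)^k < \<epsilon> / e" using K by linarith
        then show ?thesis using e by (simp add: tol_def field_simps power_one_over)
      qed
      then show ?thesis by blast
    qed
    have "\<exists>N. \<forall>a\<ge>N. \<forall>b\<ge>N. p l (y a - y b) < \<epsilon>" if epos: "\<epsilon> > 0" for l \<epsilon>
    proof -
      obtain K where K: "\<forall>k\<ge>K. tol k < \<epsilon> / 4" using tol_small[of "\<epsilon> / 4"] epos by auto
      define K' where "K' = max K l"
      have "p l (y a - y b) < \<epsilon>" if "a \<ge> K'" "b \<ge> K'" for a b
      proof -
        have "p l (y a - y b) \<le> p l (y K' - y a) + p l (y K' - y b)"
          using ptri[of l "y a" "y b" "y K'"] pcomm[of l "y a" "y K'"] by simp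
        also have "\<dots> \<le> 2 * tol K' + 2 * tol K'"
        proof -
          have l: "l \<le> i + K'" "K' \<le> a" "K' \<le> b" using that unfolding K'_def by auto
          show ?thesis using bound2[OF l(1,2)] bound2[OF l(1,3)] by simp
        qed
        also have "\<dots> < \<epsilon>" using K[rule_format, of K'] by (simp add: K'_def)
        finally show ?thesis .
      qed
      then show ?thesis by blast
    qed
    then obtain Y where Y: "\<forall>l. (\<lambda>n. p l (y n - Y)) \<longlonglongrightarrow> 0" using pcomplete by blast
    have "Y \<in> L" unfolding L_def mem_Collect_eq
    proof
      fix l
      show "(\<lambda>n. pd l Y (C n)) \<longlonglongrightarrow> 0"
      proof (rule tend0I)
        fix \<epsilon> :: real assume \<epsilon>: "\<epsilon> > 0"
        obtain K1 where K1: "\<forall>k\<ge>K1. tol k < \<epsilon> / 2" using tol_small[of "\<epsilon> / 2"] \<epsilon> by auto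
        have "eventually (\<lambda>k. p l (y k - Y) < \<epsilon> / 2) sequentially"
          using order_tendstoD(2)[OF spec[OF Y, of l], of "\<epsilon>/2"] \<epsilon> by simp
        then obtain K2 where K2: "\<forall>k\<ge>K2. p l (y k - Y) < \<epsilon> / 2" unfolding eventually_sequentially by blast
        define K where "K = max (max K1 K2) l"
        have yK: "y K \<in> C (m K)" using ystep by blast
        have "eventually (\<lambda>n. n \<ge> m K) sequentially" by (rule eventually_ge_at_top)
        then show "eventually (\<lambda>n. 0 \<le> pd l Y (C n) \<and> pd l Y (C n) < \<epsilon>) sequentially"
        proof eventually_elim
          case (elim n)
          have "pd l Y (C n) \<le> p l (Y - y K) + pd l (y K) (C n)" by (rule pd_tri[OF Cne])
          also have "pd l (y K) (C n) \<le> hexcess p l (C (m K)) (C n)" by (rule hex_upper[OF Cb Cne yK])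
          also have "\<dots> \<le> hausdorff p l (C (m K)) (C n)" by (rule hex_le_haus)
          also have "\<dots> \<le> hausdorff p (i + K) (C (m K)) (C n)"
            by (rule haus_mono_i) (auto simp: K_def Cb Cne)
          also have "\<dots> < tol K" by (rule mH) (use elim in auto)
          finally have "pd l Y (C n) < p l (Y - y K) + tol K" by simp
          moreover have "p l (Y - y K) < \<epsilon> / 2" using K2 pcomm[of l Y "y K"] by (simp add: K_def)
          moreover have "tol K < \<epsilon> / 2" using K1 by (simp add: K_def)
          ultimately show ?case using pd_nonneg[OF Cne] by fastforce
        qed
      qed
    qed
    moreover have "p i (c - Y) \<le> 2 * e"
    proof -
      have "p i (c - Y) \<le> 2 * e + \<epsilon>" if \<epsilon>: "\<epsilon> > 0" for \<epsilon>
      proof -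
        have "eventually (\<lambda>k. p i (y k - Y) < \<epsilon>) sequentially"
          using order_tendstoD(2)[OF spec[OF Y, of i], of \<epsilon>] \<epsilon> by simp
        then obtain k where k: "p i (y k - Y) < \<epsilon>" by (meson eventually_sequentially order.refl)
        have "p i (c - Y) \<le> p i (y 0 - y k) + p i (y k - Y)" using ptri[of i c Y "y k"] y0 by simp
        also have "p i (y 0 - y k) \<le> 2 * tol 0" by (rule bound2) auto
        finally show ?thesis using k by (simp add: tol_def)
      qed
      then show ?thesis by (rule field_le_epsilon)
    qed
    ultimately show ?thesis by blast
  qed
  have Lne: "L \<noteq> {}"
  proof -
    obtain c where "c \<in> C (Nf 0 1)" using Cne by blast
    then have "\<exists>Y\<in>L. p 0 (c - Y) \<le> 2 * 1" by (intro approx) auto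
    then show ?thesis by blast
  qed
  have ex1: "hexcess p i (C n) L \<le> 2 * e" if e: "e > 0" and n: "n \<ge> Nf i e" for i e n
  proof (rule hex_least[OF Cne])
    fix c assume c: "c \<in> C n"
    obtain Y where Y: "Y \<in> L" "p i (c - Y) \<le> 2 * e" using approx[OF e n c] by blast
    show "pd i c L \<le> 2 * e" using pd_le[OF Y(1), of i c] Y(2) by linarith
  qed
  have ex2pt: "pd i y (C n) \<le> e" if e: "e > 0" and n: "n \<ge> Nf i e" and y: "y \<in> L" for i e n y
  proof -
    have "pd i y (C n) \<le> e + \<epsilon>" if \<epsilon>: "\<epsilon> > 0" for \<epsilon>
    proof -
      have "eventually (\<lambda>m. pd i y (C m) < \<epsilon>) sequentially"
        using y order_tendstoD(2)[of "\<lambda>m. pd i y (C m)" 0 sequentially \<epsilon>] \<epsilon> unfolding L_def by simp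
      then obtain m where m: "m \<ge> Nf i e" "pd i y (C m) < \<epsilon>"
        unfolding eventually_sequentially by (meson max.cobounded1 max.cobounded2)
      have "pd i y (C n) \<le> pd i y (C m) + hexcess p i (C m) (C n)" by (rule pd_via[OF Cb Cne Cne])
      also have "hexcess p i (C m) (C n) \<le> hausdorff p i (C m) (C n)" by (rule hex_le_haus)
      also have "\<dots> < e" by (rule Nf[OF e m(1) n])
      finally show ?thesis using m(2) by simp
    qed
    then show "pd i y (C n) \<le> e" by (rule field_le_epsilon)
  qed
  have ex2: "hexcess p i L (C n) \<le> e" if e: "e > 0" and n: "n \<ge> Nf i e" for i e n
    by (rule hex_least[OF Lne]) (rule ex2pt[OF e n])
  have Lconv: "convex L" unfolding convex_def
  proof (intro ballI allI impI)
    fix y1 y2 and u v :: real assume y: "y1 \<in> L" "y2 \<in> L" and uv: "0 \<le> u" "0 \<le> v" "u + v = 1"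
    show "u *\<^sub>R y1 + v *\<^sub>R y2 \<in> L" unfolding L_def mem_Collect_eq
    proof
      fix l show "(\<lambda>n. pd l (u *\<^sub>R y1 + v *\<^sub>R y2) (C n)) \<longlonglongrightarrow> 0"
      proof (rule tend0I)
        fix \<epsilon> :: real assume \<epsilon>: "\<epsilon> > 0"
        have "eventually (\<lambda>n. pd l y1 (C n) < \<epsilon>) sequentially"
          using y(1) order_tendstoD(2)[of "\<lambda>m. pd l y1 (C m)" 0 sequentially \<epsilon>] \<epsilon> unfolding L_def by simp
        moreover have "eventually (\<lambda>n. pd l y2 (C n) < \<epsilon>) sequentially"
          using y(2) order_tendstoD(2)[of "\<lambda>m. pd l y2 (C m)" 0 sequentially \<epsilon>] \<epsilon> unfolding L_def by simp
        ultimately show "eventually (\<lambda>n. 0 \<le> pd l (u *\<^sub>R y1 + v *\<^sub>R y2) (C n) \<and> pd l (u *\<^sub>R y1 + v *\<^sub>R y2) (C n) < \<epsilon>) sequentially"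
        proof eventually_elim
          case (elim n)
          obtain b1 where b1: "b1 \<in> C n" "p l (y1 - b1) < \<epsilon>" using pd_lt[OF Cne elim(1)] by blast
          obtain b2 where b2: "b2 \<in> C n" "p l (y2 - b2) < \<epsilon>" using pd_lt[OF Cne elim(2)] by blast
          have bC: "u *\<^sub>R b1 + v *\<^sub>R b2 \<in> C n" using convexD[OF Cc b1(1) b2(1) uv] .
          have "pd l (u *\<^sub>R y1 + v *\<^sub>R y2) (C n) \<le> p l (u *\<^sub>R y1 + v *\<^sub>R y2 - (u *\<^sub>R b1 + v *\<^sub>R b2))"
            by (rule pd_le[OF bC])
          also have "u *\<^sub>R y1 + v *\<^sub>R y2 - (u *\<^sub>R b1 + v *\<^sub>R b2) = u *\<^sub>R (y1 - b1) + v *\<^sub>R (y2 - b2)"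
            by (simp add: algebra_simps)
          also have "p l \<dots> \<le> u * p l (y1 - b1) + v * p l (y2 - b2)"
            using sub[of l "u *\<^sub>R (y1 - b1)" "v *\<^sub>R (y2 - b2)"] hom uv by simp
          also have "\<dots> < \<epsilon>" by (rule conv_lt[OF uv b1(2) b2(2)])
          finally show ?case using pd_nonneg[OF Cne] by simp
        qed
      qed
    qed
  qed
  have Lclosed: "closedin (seminorm_topology p) L"
  proof (rule closedI)
    fix y assume H: "\<forall>i e. e>0 \<longrightarrow> (\<exists>c\<in>L. p i (y - c) < e)"
    show "y \<in> L" unfolding L_def mem_Collect_eq
    proof
      fix l show "(\<lambda>n. pd l y (C n)) \<longlonglongrightarrow> 0"
      proof (rule tend0I)
        fix \<epsilon> :: real assume \<epsilon>: "\<epsilon> > 0"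
        obtain z where z: "z \<in> L" "p l (y - z) < \<epsilon>/2" using H \<epsilon> by (meson half_gt_zero)
        have "eventually (\<lambda>n. pd l z (C n) < \<epsilon>/2) sequentially"
          using z(1) order_tendstoD(2)[of "\<lambda>m. pd l z (C m)" 0 sequentially "\<epsilon>/2"] \<epsilon> unfolding L_def by simp
        then show "eventually (\<lambda>n. 0 \<le> pd l y (C n) \<and> pd l y (C n) < \<epsilon>) sequentially"
        proof eventually_elim
          case (elim n)
          have "pd l y (C n) \<le> p l (y - z) + pd l z (C n)" by (rule pd_tri[OF Cne])
          then show ?case using elim z(2) pd_nonneg[OF Cne] by fastforce
        qed
      qed
    qed
  qed
  have Lptb: "ptb L" unfolding ptb_def
  proof (intro allI impI)
    fix l and \<epsilon> :: real assume \<epsilon>: "\<epsilon> > 0"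
    define \<delta> where "\<delta> = \<epsilon> / 6"
    have \<delta>: "\<delta> > 0" using \<epsilon> by (simp add: \<delta>_def)
    define n where "n = Nf l \<delta>"
    obtain F where F: "finite F" "F \<subseteq> C n" "\<forall>y\<in>C n. \<exists>x\<in>F. p l (y - x) < \<delta>"
      using ptbD[OF Cp \<delta>, of n l] by blast
    define F' where "F' = {x \<in> F. \<exists>y\<in>L. p l (x - y) < 3 * \<delta>}"
    define g where "g x = (SOME y. y \<in> L \<and> p l (x - y) < 3 * \<delta>)" for x
    have g: "g x \<in> L \<and> p l (x - g x) < 3 * \<delta>" if xF: "x \<in> F'" for x
    proof -
      have "\<exists>y. y \<in> L \<and> p l (x - y) < 3 * \<delta>" using xF unfolding F'_def by blast
      then show ?thesis unfolding g_def by (rule someI_ex)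
    qed
    have "\<forall>y\<in>L. \<exists>w\<in>g ` F'. p l (y - w) < \<epsilon>"
    proof
      fix y assume y: "y \<in> L"
      have "pd l y (C n) \<le> \<delta>" using ex2pt[OF \<delta> _ y] by (simp add: n_def)
      then have "pd l y (C n) < 2 * \<delta>" using \<delta> by linarith
      then obtain c where c: "c \<in> C n" "p l (y - c) < 2 * \<delta>" using pd_lt[OF Cne] by blast
      obtain x where x: "x \<in> F" "p l (c - x) < \<delta>" using F c by blast
      have yx: "p l (y - x) < 3 * \<delta>" using ptri[of l y x c] c x by simp
      then have xF': "x \<in> F'" unfolding F'_def using x(1) y yx pcomm[of l x y] by (intro CollectI conjI bexI[of _ y]) auto
      have "p l (y - g x) \<le> p l (y - x) + p l (x - g x)" by (rule ptri)
      also have "\<dots> < 6 * \<delta>" using yx g[OF xF'] by simp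
      finally show "\<exists>w\<in>g ` F'. p l (y - w) < \<epsilon>" using xF' by (auto simp: \<delta>_def)
    qed
    moreover have "finite (g ` F')" using F(1) unfolding F'_def by simp
    moreover have "g ` F' \<subseteq> L" using g by blast
    ultimately show "\<exists>F. finite F \<and> F \<subseteq> L \<and> (\<forall>y\<in>L. \<exists>x\<in>F. p l (y - x) < \<epsilon>)" by blast
  qed
  have "L \<in> ck p" unfolding ck_def using Lne Lconv ptb_closed_compact[OF Lptb Lclosed] by simp
  moreover have "(\<lambda>n. hausdorff p i (C n) L) \<longlonglongrightarrow> 0" for i
  proof (rule tend0I)
    fix \<epsilon> :: real assume \<epsilon>: "\<epsilon> > 0"
    have "eventually (\<lambda>n. n \<ge> Nf i (\<epsilon>/4)) sequentially" by (rule eventually_ge_at_top)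
    then show "eventually (\<lambda>n. 0 \<le> hausdorff p i (C n) L \<and> hausdorff p i (C n) L < \<epsilon>) sequentially"
    proof eventually_elim
      case (elim n)
      have "hexcess p i (C n) L \<le> 2 * (\<epsilon>/4)" by (rule ex1) (use \<epsilon> elim in auto)
      moreover have "hexcess p i L (C n) \<le> \<epsilon>/4" by (rule ex2) (use \<epsilon> elim in auto)
      ultimately have "hausdorff p i (C n) L < \<epsilon>" unfolding hausdorff_def using \<epsilon> by simp
      then show ?case using haus_nonneg[OF Cb Cne Lne] by simp
    qed
  qed
  ultimately show ?thesis by blast
qed

end


abbreviation MM :: "real measure" where "MM \<equiv> lebesgue_on {0..1::real}"

lemma I01: "{0..1::real} \<in> sets lebesgue" by simp

lemma fmM: "finite_measure MM"
  by (rule finite_measure_lebesgue_on) simp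

lemma space_MM[simp]: "space MM = {0..1}" by (simp add: space_restrict_space)

lemma sets_MM: "A \<in> sets lebesgue \<Longrightarrow> A \<subseteq> {0..1} \<Longrightarrow> A \<in> sets MM"
  using sets_restrict_space_iff[of "{0..1::real}" lebesgue A] I01 by simp

lemma measure_MM: "A \<in> sets lebesgue \<Longrightarrow> A \<subseteq> {0..1} \<Longrightarrow> measure MM A = measure lebesgue A"
  by (rule measure_restrict_space) (use I01 in auto)

lemma meas_AE:
  fixes f g :: "real \<Rightarrow> real"
  assumes f: "f \<in> borel_measurable MM" and ae: "AE x in MM. f x = g x"
  shows "g \<in> borel_measurable MM"
proof (rule measurableI)
  fix x assume "x \<in> space MM" then show "g x \<in> space borel" by simp
next
  fix A :: "real set" assume A: "A \<in> sets borel"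
  have X: "f -` A \<inter> space MM \<in> sets MM" using measurable_sets[OF f A] .
  then have Xl: "f -` A \<inter> {0..1} \<in> sets lebesgue"
    using sets_restrict_space_iff[of "{0..1::real}" lebesgue] I01 by simp
  have ae': "AE x in lebesgue. x \<in> {0..1} \<longrightarrow> f x = g x"
    using ae AE_restrict_space_iff[of "{0..1::real}" lebesgue] I01 by simp
  have "AE x in lebesgue. x \<in> f -` A \<inter> {0..1} \<longleftrightarrow> x \<in> g -` A \<inter> {0..1}"
    by (rule AE_mp[OF ae'], rule AE_I2) (auto simp: vimage_def)
  then have "g -` A \<inter> {0..1} \<in> sets lebesgue"
    by (rule completion.in_sets_AE[OF _ Xl]) (unfold space_completion space_lborel space_borel, rule subset_UNIV)
  then have "g -` A \<inter> {0..1} \<in> sets MM" by (rule sets_MM) (rule Int_lower2)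
  then show "g -` A \<inter> space MM \<in> sets MM" by (simp only: space_MM)
qed

context fre begin

definition lsets :: "(real set \<times> 'a set) list \<Rightarrow> bool" where
  "lsets S \<longleftrightarrow> (\<forall>AC\<in>set S. fst AC \<in> sets lebesgue \<and> fst AC \<subseteq> {0..1})"

definition gsets :: "(real set \<times> 'a set) list \<Rightarrow> bool" where
  "gsets S \<longleftrightarrow> (\<forall>AC\<in>set S. good (snd AC))"

lemma simple_sets: assumes "simple_mf (ck p) S" shows "lsets S" "gsets S"
proof -
  have "fst AC \<in> sets lebesgue \<and> fst AC \<subseteq> {0..1} \<and> snd AC \<in> ck p" if "AC \<in> set S" for AC
  proof -
    obtain j where "j < length S" "AC = S ! j" using \<open>AC \<in> set S\<close> by (metis in_set_conv_nth)
    then show ?thesis using assms unfolding simple_mf_def by blast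
  qed
  then show "lsets S" "gsets S" unfolding lsets_def gsets_def using ck_good by auto
qed

lemma sfs_int:
  assumes "lsets S" and E: "E \<in> sets lebesgue" "E \<subseteq> {0..1}"
  shows "integrable MM (\<lambda>t. sfs f (\<lambda>A. indicator A t) S) \<and>
    integral\<^sup>L MM (\<lambda>t. indicator E t * sfs f (\<lambda>A. indicator A t) S) = sfs f (\<lambda>A. measure lebesgue (A \<inter> E)) S"
  using assms(1)
proof (induction S)
  case Nil then show ?case by simp
next
  case (Cons AC S)
  obtain A C where AC: "AC = (A, C)" by (cases AC)
  have A: "A \<in> sets lebesgue" "A \<subseteq> {0..1}" and S: "lsets S"
    using Cons.prems AC unfolding lsets_def by auto
  have AM: "A \<in> sets MM" using sets_MM[OF A] .
  have AEM: "A \<inter> E \<in> sets MM" using sets_MM[of "A \<inter> E"] A E by auto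
  have EM: "E \<in> sets MM" using sets_MM[OF E] .
  have fin: "emeasure MM X < \<infinity>" for X using finite_measure.emeasure_finite[OF fmM, of X] by (simp add: less_top)
  define r where "r t = sfs f (\<lambda>A. indicator A t) S" for t
  define s where "s = support_fun f C"
  have IH: "integrable MM r" "integral\<^sup>L MM (\<lambda>t. indicator E t * r t) = sfs f (\<lambda>A. measure lebesgue (A \<inter> E)) S"
    using Cons.IH[OF S] unfolding r_def by auto
  have i1: "integrable MM (\<lambda>t. indicator A t * s)"
    using integrable_real_indicator[OF AM fin] by simp
  have "integrable MM (\<lambda>t. indicator A t * s + r t)" using i1 IH(1) by simp
  moreover have "integral\<^sup>L MM (\<lambda>t. indicator E t * (indicator A t * s + r t))
      = measure lebesgue (A \<inter> E) * s + sfs f (\<lambda>A. measure lebesgue (A \<inter> E)) S"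
  proof -
    have eq: "(\<lambda>t. indicator E t * (indicator A t * s + r t)) = (\<lambda>t. indicator (A \<inter> E) t * s + indicator E t * r t)"
      by (auto simp: indicator_def fun_eq_iff)
    have i2: "integrable MM (\<lambda>t. indicator (A \<inter> E) t * s)"
      using integrable_real_indicator[OF AEM fin] by simp
    have i3: "integrable MM (\<lambda>t. indicator E t * r t)"
      using integrable_mult_indicator[OF EM IH(1)] by simp
    have "integral\<^sup>L MM (\<lambda>t. indicator (A \<inter> E) t * s) = measure MM (A \<inter> E \<inter> space MM) * s"
      by simp
    also have "A \<inter> E \<inter> space MM = A \<inter> E" using A by auto
    also have "measure MM (A \<inter> E) = measure lebesgue (A \<inter> E)" using measure_MM[of "A \<inter> E"] A E by auto
    finally have "integral\<^sup>L MM (\<lambda>t. indicator (A \<inter> E) t * s) = measure lebesgue (A \<inter> E) * s" .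
    then show ?thesis unfolding eq using IH(2) i2 i3 by simp
  qed
  ultimately show ?case using AC unfolding r_def s_def by (simp add: algebra_simps)
qed

lemma sfs_LINT:
  assumes "lsets S" and E: "E \<in> sets lebesgue" "E \<subseteq> {0..1}"
  shows "(LINT t:E|MM. sfs f (\<lambda>A. indicator A t) S) = sfs f (\<lambda>A. measure lebesgue (A \<inter> E)) S"
  using sfs_int[OF assms] unfolding set_lebesgue_integral_def by simp

lemma sfs_meas: "lsets S \<Longrightarrow> (\<lambda>t. sfs f (\<lambda>A. indicator A t) S) \<in> borel_measurable MM"
  using sfs_int[of S "{}"] by auto

end


lemma lim_cmp: "(\<And>n. \<bar>a n - b\<bar> \<le> c n) \<Longrightarrow> c \<longlonglongrightarrow> 0 \<Longrightarrow> a \<longlonglongrightarrow> (b::real)"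
proof -
  assume H: "\<And>n. \<bar>a n - b\<bar> \<le> c n" and c: "c \<longlonglongrightarrow> 0"
  have "(\<lambda>n. a n - b) \<longlonglongrightarrow> 0" by (rule Lim_null_comparison[OF _ c]) (use H in simp)
  then have "(\<lambda>n. (a n - b) + b) \<longlonglongrightarrow> 0 + b" by (rule tendsto_add) simp
  then show ?thesis by simp
qed

context fre begin

lemma mf_good: "simple_mf (ck p) S \<Longrightarrow> good (mf_eval S t)"
  unfolding mf_eval_G using G_good simple_sets(2) gsets_def by blast

lemma si_good: "simple_mf (ck p) S \<Longrightarrow> good (simple_int p S E)"
  unfolding simple_int_G using closure_good G_good simple_sets(2) gsets_def by blast

lemma gs_eq: "dominated f k c \<Longrightarrow> simple_mf (ck p) S \<Longrightarrow> support_fun f (mf_eval S t) = sfs f (\<lambda>A. indicator A t) S"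
  unfolding mf_eval_G using sf_G simple_sets(2) gsets_def by simp

lemma si_eq: "dominated f k c \<Longrightarrow> simple_mf (ck p) S \<Longrightarrow> support_fun f (simple_int p S E) = sfs f (\<lambda>A. measure lebesgue (A \<inter> E)) S"
  unfolding simple_int_G
  using sf_closure[of f k c] G_good sf_G[of f k c] simple_sets(2) gsets_def by simp

lemma si_int: "dominated f k c \<Longrightarrow> simple_mf (ck p) S \<Longrightarrow> E \<in> sets lebesgue \<Longrightarrow> E \<subseteq> {0..1} \<Longrightarrow>
   support_fun f (simple_int p S E) = (LINT t:E|MM. support_fun f (mf_eval S t))"
  using si_eq[of f k c S E] gs_eq[of f k c S] sfs_LINT[of S E f] simple_sets(1) by simp

lemma si_diff:
  assumes f: "dominated f k c" and S1: "simple_mf (ck p) S1" and S2: "simple_mf (ck p) S2"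
    and E: "E \<in> sets lebesgue" "E \<subseteq> {0..1}"
  shows "ennreal \<bar>support_fun f (simple_int p S1 E) - support_fun f (simple_int p S2 E)\<bar>
    \<le> (\<integral>\<^sup>+ t. ennreal \<bar>support_fun f (mf_eval S1 t) - support_fun f (mf_eval S2 t)\<bar> \<partial>MM)"
proof -
  define g1 where "g1 t = sfs f (\<lambda>A. indicator A t) S1" for t
  define g2 where "g2 t = sfs f (\<lambda>A. indicator A t) S2" for t
  have i1: "integrable MM g1" and i2: "integrable MM g2"
    using sfs_int[OF simple_sets(1)[OF S1] E] sfs_int[OF simple_sets(1)[OF S2] E] unfolding g1_def g2_def by auto
  have EM: "E \<in> sets MM" using sets_MM[OF E] .
  have j1: "integrable MM (\<lambda>t. indicator E t * g1 t)" using integrable_mult_indicator[OF EM i1] by simp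
  have j2: "integrable MM (\<lambda>t. indicator E t * g2 t)" using integrable_mult_indicator[OF EM i2] by simp
  have "support_fun f (simple_int p S1 E) - support_fun f (simple_int p S2 E)
      = integral\<^sup>L MM (\<lambda>t. indicator E t * g1 t) - integral\<^sup>L MM (\<lambda>t. indicator E t * g2 t)"
    using si_eq[OF f S1, of E] si_eq[OF f S2, of E] sfs_int[OF simple_sets(1)[OF S1] E] sfs_int[OF simple_sets(1)[OF S2] E]
    unfolding g1_def g2_def by simp
  also have "\<dots> = integral\<^sup>L MM (\<lambda>t. indicator E t * g1 t - indicator E t * g2 t)"
    using j1 j2 by simp
  finally have eq: "support_fun f (simple_int p S1 E) - support_fun f (simple_int p S2 E)
      = integral\<^sup>L MM (\<lambda>t. indicator E t * g1 t - indicator E t * g2 t)" .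
  have "ennreal \<bar>integral\<^sup>L MM (\<lambda>t. indicator E t * g1 t - indicator E t * g2 t)\<bar>
      \<le> (\<integral>\<^sup>+ t. ennreal (norm (indicator E t * g1 t - indicator E t * g2 t)) \<partial>MM)"
    using integral_norm_bound_ennreal[of MM "\<lambda>t. indicator E t * g1 t - indicator E t * g2 t"] j1 j2 by simp
  also have "\<dots> \<le> (\<integral>\<^sup>+ t. ennreal \<bar>g1 t - g2 t\<bar> \<partial>MM)"
    by (rule nn_integral_mono) (auto simp: indicator_def)
  also have "\<dots> = (\<integral>\<^sup>+ t. ennreal \<bar>support_fun f (mf_eval S1 t) - support_fun f (mf_eval S2 t)\<bar> \<partial>MM)"
    unfolding g1_def g2_def using gs_eq[OF f S1] gs_eq[OF f S2] by simp
  finally show ?thesis unfolding eq .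
qed

lemma mf_haus:
  assumes f: "dominated f k 1" and S1: "simple_mf (ck p) S1" and S2: "simple_mf (ck p) S2"
  shows "(\<integral>\<^sup>+ t. ennreal \<bar>support_fun f (mf_eval S1 t) - support_fun f (mf_eval S2 t)\<bar> \<partial>MM)
     \<le> (\<integral>\<^sup>+ t. ennreal (hausdorff p k (mf_eval S1 t) (mf_eval S2 t)) \<partial>MM)"
proof (rule nn_integral_mono)
  fix t
  have "\<bar>support_fun f (mf_eval S1 t) - support_fun f (mf_eval S2 t)\<bar> \<le> 1 * hausdorff p k (mf_eval S1 t) (mf_eval S2 t)"
    using sf_haus[OF f] mf_good[OF S1] mf_good[OF S2] unfolding good_def by blast
  then show "ennreal \<bar>support_fun f (mf_eval S1 t) - support_fun f (mf_eval S2 t)\<bar>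
       \<le> ennreal (hausdorff p k (mf_eval S1 t) (mf_eval S2 t))" by (simp add: ennreal_leI)
qed

lemma si_cauchy:
  assumes IS: "integrable_seq p \<Gamma> S" and E: "E \<in> sets lebesgue" "E \<subseteq> {0..1}" and e: "e > 0"
  shows "\<exists>N. \<forall>n\<ge>N. \<forall>m\<ge>N. hausdorff p i (simple_int p (S n) E) (simple_int p (S m) E) < e"
proof -
  have Sg: "\<And>n. simple_mf (ck p) (S n)" using IS unfolding integrable_seq_def by blast
  have Cau: "\<forall>i. \<forall>e>0. \<exists>N. \<forall>n\<ge>N. \<forall>m\<ge>N.
        (\<integral>\<^sup>+ t. ennreal (hausdorff p i (mf_eval (S n) t) (mf_eval (S m) t)) \<partial>MM) < ennreal e"
    using IS unfolding integrable_seq_def by blast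
  obtain N where N: "\<forall>n\<ge>N. \<forall>m\<ge>N.
        (\<integral>\<^sup>+ t. ennreal (hausdorff p i (mf_eval (S n) t) (mf_eval (S m) t)) \<partial>MM) < ennreal (e/2)"
    using Cau e by (meson half_gt_zero)
  have "hausdorff p i (simple_int p (S n) E) (simple_int p (S m) E) < e" if nm: "n \<ge> N" "m \<ge> N" for n m
  proof -
    have "hausdorff p i (simple_int p (S n) E) (simple_int p (S m) E) \<le> e / 2"
    proof (rule haus_le)
      show "bnd (simple_int p (S n) E)" "simple_int p (S n) E \<noteq> {}" "convex (simple_int p (S n) E)"
        using si_good[OF Sg[of n]] unfolding good_def by auto
      show "bnd (simple_int p (S m) E)" "simple_int p (S m) E \<noteq> {}" "convex (simple_int p (S m) E)"
        using si_good[OF Sg[of m]] unfolding good_def by auto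
      fix f assume f: "linear f" "\<forall>x. f x \<le> p i x"
      have fd: "dominated f i 1" by (rule dominated_Fi[OF f])
      have "ennreal \<bar>support_fun f (simple_int p (S n) E) - support_fun f (simple_int p (S m) E)\<bar>
          \<le> (\<integral>\<^sup>+ t. ennreal (hausdorff p i (mf_eval (S n) t) (mf_eval (S m) t)) \<partial>MM)"
        using si_diff[OF fd Sg Sg E] mf_haus[OF fd Sg Sg] by (rule order_trans)
      also have "\<dots> < ennreal (e/2)" using N nm by blast
      finally show "\<bar>support_fun f (simple_int p (S n) E) - support_fun f (simple_int p (S m) E)\<bar> \<le> e / 2"
        using e by (simp add: ennreal_less_iff)
    qed
    then show ?thesis using e by simp
  qed
  then show ?thesis by blast
qed


lemma main_conv:
  assumes Gck: "\<forall>t\<in>{0..1}. \<Gamma> t \<in> ck p" and IS: "integrable_seq p \<Gamma> S"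
    and E: "E \<in> sets lebesgue" "E \<subseteq> {0..1}" and f: "dominated f k 1"
  shows "integrable MM (\<lambda>t. support_fun f (\<Gamma> t)) \<and>
    (\<lambda>n. support_fun f (simple_int p (S n) E)) \<longlonglongrightarrow> (LINT t:E|MM. support_fun f (\<Gamma> t))"
proof -
  have Sg: "\<And>n. simple_mf (ck p) (S n)" using IS unfolding integrable_seq_def by blast
  have AEk: "AE t in MM. (\<lambda>n. hausdorff p k (mf_eval (S n) t) (\<Gamma> t)) \<longlonglongrightarrow> 0"
    using IS unfolding integrable_seq_def by blast
  have Cau: "\<forall>e>0. \<exists>N. \<forall>n\<ge>N. \<forall>m\<ge>N.
        (\<integral>\<^sup>+ t. ennreal (hausdorff p k (mf_eval (S n) t) (mf_eval (S m) t)) \<partial>MM) < ennreal e"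
    using IS unfolding integrable_seq_def by blast
  define gs where "gs n t = support_fun f (mf_eval (S n) t)" for n t
  define g where "g t = support_fun f (\<Gamma> t)" for t
  have gs_sfs: "gs n = (\<lambda>t. sfs f (\<lambda>A. indicator A t) (S n))" for n
    unfolding gs_def using gs_eq[OF f Sg] by (simp add: fun_eq_iff)
  have gs_int: "integrable MM (gs n)" for n
    unfolding gs_sfs using sfs_int[OF simple_sets(1)[OF Sg[of n]], of "{}" f] by simp
  have gs_meas[measurable]: "gs n \<in> borel_measurable MM" for n using gs_int[of n] by simp
  have bnd_g: "\<bar>gs n t - g t\<bar> \<le> hausdorff p k (mf_eval (S n) t) (\<Gamma> t)" if t: "t \<in> {0..1}" for n t
  proof -
    have "good (\<Gamma> t)" using Gck t ck_good by blast
    then show ?thesis unfolding gs_def g_def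
      using sf_haus[OF f] mf_good[OF Sg[of n]] unfolding good_def by fastforce
  qed
  have AEconv: "AE t in MM. (\<lambda>n. gs n t) \<longlonglongrightarrow> g t"
  proof (rule AE_mp[OF AEk], rule AE_I2, rule impI)
    fix t assume t: "t \<in> space MM" and H: "(\<lambda>n. hausdorff p k (mf_eval (S n) t) (\<Gamma> t)) \<longlonglongrightarrow> 0"
    show "(\<lambda>n. gs n t) \<longlonglongrightarrow> g t" by (rule lim_cmp[OF _ H]) (use bnd_g t in simp)
  qed
  define h where "h t = lim (\<lambda>n. gs n t)" for t
  have h_meas: "h \<in> borel_measurable MM" unfolding h_def by measurable
  have "AE t in MM. h t = g t"
  proof (rule AE_mp[OF AEconv], rule AE_I2, rule impI)
    fix t assume "(\<lambda>n. gs n t) \<longlonglongrightarrow> g t" then show "h t = g t" unfolding h_def by (rule limI)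
  qed
  then have g_meas[measurable]: "g \<in> borel_measurable MM" by (rule meas_AE[OF h_meas])
  have L1: "\<exists>N. \<forall>n\<ge>N. (\<integral>\<^sup>+ t. ennreal \<bar>gs n t - g t\<bar> \<partial>MM) \<le> ennreal e" if e: "e > 0" for e
  proof -
    obtain N where N: "\<forall>n\<ge>N. \<forall>m\<ge>N.
        (\<integral>\<^sup>+ t. ennreal (hausdorff p k (mf_eval (S n) t) (mf_eval (S m) t)) \<partial>MM) < ennreal e"
      using Cau e by blast
    have "(\<integral>\<^sup>+ t. ennreal \<bar>gs n t - g t\<bar> \<partial>MM) \<le> ennreal e" if n: "n \<ge> N" for n
    proof -
      have "AE t in MM. ennreal \<bar>gs n t - g t\<bar> = liminf (\<lambda>m. ennreal \<bar>gs n t - gs m t\<bar>)"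
      proof (rule AE_mp[OF AEconv], rule AE_I2, rule impI)
        fix t assume "(\<lambda>m. gs m t) \<longlonglongrightarrow> g t"
        then have "(\<lambda>m. ennreal \<bar>gs n t - gs m t\<bar>) \<longlonglongrightarrow> ennreal \<bar>gs n t - g t\<bar>"
          by (intro tendsto_ennrealI tendsto_rabs tendsto_diff) auto
        then show "ennreal \<bar>gs n t - g t\<bar> = liminf (\<lambda>m. ennreal \<bar>gs n t - gs m t\<bar>)"
          by (rule lim_imp_Liminf[OF trivial_limit_sequentially, symmetric])
      qed
      then have "(\<integral>\<^sup>+ t. ennreal \<bar>gs n t - g t\<bar> \<partial>MM) = (\<integral>\<^sup>+ t. liminf (\<lambda>m. ennreal \<bar>gs n t - gs m t\<bar>) \<partial>MM)"
        by (rule nn_integral_cong_AE)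
      also have "\<dots> \<le> liminf (\<lambda>m. \<integral>\<^sup>+ t. ennreal \<bar>gs n t - gs m t\<bar> \<partial>MM)"
        by (rule nn_integral_liminf) measurable
      also have "\<dots> \<le> ennreal e"
      proof (rule Liminf_le)
        show "eventually (\<lambda>m. (\<integral>\<^sup>+ t. ennreal \<bar>gs n t - gs m t\<bar> \<partial>MM) \<le> ennreal e) sequentially"
          unfolding eventually_sequentially
        proof (intro exI allI impI)
          fix m assume m: "N \<le> m"
          have "(\<integral>\<^sup>+ t. ennreal \<bar>gs n t - gs m t\<bar> \<partial>MM)
              \<le> (\<integral>\<^sup>+ t. ennreal (hausdorff p k (mf_eval (S n) t) (mf_eval (S m) t)) \<partial>MM)"
            unfolding gs_def by (rule mf_haus[OF f Sg Sg])
          also have "\<dots> < ennreal e" using N n m by blast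
          finally show "(\<integral>\<^sup>+ t. ennreal \<bar>gs n t - gs m t\<bar> \<partial>MM) \<le> ennreal e" by simp
        qed
      qed simp
      finally show ?thesis .
    qed
    then show ?thesis by blast
  qed
  obtain N1 where N1: "\<forall>n\<ge>N1. (\<integral>\<^sup>+ t. ennreal \<bar>gs n t - g t\<bar> \<partial>MM) \<le> ennreal 1"
    using L1[of 1] by auto
  have d_int: "integrable MM (\<lambda>t. g t - gs N1 t)"
  proof (rule integrableI_bounded)
    show "(\<lambda>t. g t - gs N1 t) \<in> borel_measurable MM" by measurable
    have "(\<integral>\<^sup>+ t. ennreal (norm (g t - gs N1 t)) \<partial>MM) = (\<integral>\<^sup>+ t. ennreal \<bar>gs N1 t - g t\<bar> \<partial>MM)"
      by (intro nn_integral_cong) (metis abs_minus_commute real_norm_def)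
    also have "\<dots> \<le> ennreal 1" using N1 by blast
    finally show "(\<integral>\<^sup>+ t. ennreal (norm (g t - gs N1 t)) \<partial>MM) < \<infinity>"
      unfolding infinity_ennreal_def using ennreal_less_top[of 1] by (rule le_less_trans)
  qed
  have g_int: "integrable MM g"
  proof -
    have "integrable MM (\<lambda>t. (g t - gs N1 t) + gs N1 t)" by (rule Bochner_Integration.integrable_add[OF d_int gs_int[of N1]])
    then show ?thesis by simp
  qed
  have EM: "E \<in> sets MM" using sets_MM[OF E] .
  have "(\<lambda>n. support_fun f (simple_int p (S n) E)) \<longlonglongrightarrow> (LINT t:E|MM. g t)"
  proof (rule LIMSEQ_I)
    fix r :: real assume r: "r > 0"
    obtain N where N: "\<forall>n\<ge>N. (\<integral>\<^sup>+ t. ennreal \<bar>gs n t - g t\<bar> \<partial>MM) \<le> ennreal (r/2)"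
      using L1[of "r/2"] r by auto
    have "norm (support_fun f (simple_int p (S n) E) - (LINT t:E|MM. g t)) < r" if n: "n \<ge> N" for n
    proof -
      have j1: "integrable MM (\<lambda>t. indicator E t * gs n t)" using integrable_mult_indicator[OF EM gs_int[of n]] by simp
      have j2: "integrable MM (\<lambda>t. indicator E t * g t)" using integrable_mult_indicator[OF EM g_int] by simp
      have "support_fun f (simple_int p (S n) E) = (LINT t:E|MM. gs n t)"
        unfolding gs_def by (rule si_int[OF f Sg E])
      then have eqd: "support_fun f (simple_int p (S n) E) - (LINT t:E|MM. g t)
          = integral\<^sup>L MM (\<lambda>t. indicator E t * gs n t - indicator E t * g t)"
        unfolding set_lebesgue_integral_def using j1 j2 by simp
      have "ennreal \<bar>support_fun f (simple_int p (S n) E) - (LINT t:E|MM. g t)\<bar>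
          = ennreal \<bar>integral\<^sup>L MM (\<lambda>t. indicator E t * gs n t - indicator E t * g t)\<bar>"
        by (simp only: eqd)
      also have "\<dots> \<le> (\<integral>\<^sup>+ t. ennreal (norm (indicator E t * gs n t - indicator E t * g t)) \<partial>MM)"
        using integral_norm_bound_ennreal[of MM "\<lambda>t. indicator E t * gs n t - indicator E t * g t"] j1 j2 by simp
      also have "\<dots> \<le> (\<integral>\<^sup>+ t. ennreal \<bar>gs n t - g t\<bar> \<partial>MM)"
        by (rule nn_integral_mono) (auto simp: indicator_def)
      also have "\<dots> \<le> ennreal (r/2)" using N n by blast
      finally have "ennreal \<bar>support_fun f (simple_int p (S n) E) - (LINT t:E|MM. g t)\<bar> \<le> ennreal (r/2)" .
      then have "\<bar>support_fun f (simple_int p (S n) E) - (LINT t:E|MM. g t)\<bar> \<le> r/2"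
        using r by (simp add: ennreal_le_iff)
      then show ?thesis using r by simp
    qed
    then show "\<exists>no. \<forall>n\<ge>no. norm (support_fun f (simple_int p (S n) E) - (LINT t:E|MM. g t)) < r" by blast
  qed
  then show ?thesis using g_int unfolding g_def by simp
qed

end


context fre begin

lemma dom_div: "dominated f k c \<Longrightarrow> dominated (\<lambda>x. f x / c) k 1"
  unfolding dominated_def
proof (intro conjI allI)
  assume H: "linear f \<and> 0 < c \<and> (\<forall>x. \<bar>f x\<bar> \<le> c * p k x)"
  then have lin: "linear f" and c: "c > 0" by auto
  show "linear (\<lambda>x. f x / c)"
    by (rule linearI) (simp_all add: linear_add[OF lin] linear_scale[OF lin] add_divide_distrib)
  fix x show "\<bar>f x / c\<bar> \<le> 1 * p k x" using H c by (simp add: field_simps)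
qed simp

lemma sf_div:
  assumes f: "dominated f k c" and X: "good X"
  shows "support_fun (\<lambda>x. f x / c) X = support_fun f X / c"
proof -
  have c: "c > 0" using f unfolding dominated_def by auto
  show ?thesis
  proof (rule antisym)
    show "support_fun (\<lambda>x. f x / c) X \<le> support_fun f X / c"
    proof (rule sf_least[OF good_ne[OF X]])
      fix x assume "x \<in> X"
      then have "f x \<le> support_fun f X" by (rule sf_upper[OF f good_bnd[OF X]])
      then show "f x / c \<le> support_fun f X / c" using c by (simp add: divide_right_mono)
    qed
    have "support_fun f X \<le> c * support_fun (\<lambda>x. f x / c) X"
    proof (rule sf_least[OF good_ne[OF X]])
      fix x assume "x \<in> X"
      then have "f x / c \<le> support_fun (\<lambda>x. f x / c) X" by (rule sf_upper[OF dom_div[OF f] good_bnd[OF X]])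
      then show "f x \<le> c * support_fun (\<lambda>x. f x / c) X" using c by (simp add: field_simps)
    qed
    then show "support_fun f X / c \<le> support_fun (\<lambda>x. f x / c) X" using c by (simp add: field_simps)
  qed
qed

lemma sf_int_dual:
  assumes Gck: "\<forall>t\<in>{0..1}. \<Gamma> t \<in> ck p" and IS: "integrable_seq p \<Gamma> S" and f: "f \<in> dual_space p"
  shows "integrable MM (\<lambda>t. support_fun f (\<Gamma> t))"
proof -
  obtain k c where fd: "dominated f k c" using dual_dominated[OF f] by blast
  have c: "c > 0" using fd unfolding dominated_def by auto
  have "integrable MM (\<lambda>t. support_fun (\<lambda>x. f x / c) (\<Gamma> t))"
    using main_conv[OF Gck IS _ _ dom_div[OF fd], of "{}"] by simp
  then have i: "integrable MM (\<lambda>t. c * support_fun (\<lambda>x. f x / c) (\<Gamma> t))" by simp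
  have eq: "c * support_fun (\<lambda>x. f x / c) (\<Gamma> t) = support_fun f (\<Gamma> t)" if tS: "t \<in> space MM" for t
    using tS Gck ck_good sf_div[OF fd] c by simp
  have "integrable MM (\<lambda>t. c * support_fun (\<lambda>x. f x / c) (\<Gamma> t)) = integrable MM (\<lambda>t. support_fun f (\<Gamma> t))"
    by (rule Bochner_Integration.integrable_cong) (simp_all add: eq)
  then show ?thesis using i by simp
qed

lemma pettis_of_mf:
  assumes Gck: "\<forall>t\<in>{0..1}. \<Gamma> t \<in> ck p" and E: "E \<in> sets lebesgue" "E \<subseteq> {0..1}"
    and x: "mf_integral p \<Gamma> E x"
  shows "pettis_integral p \<Gamma> E x"
proof -
  have xck: "x \<in> ck p" using x unfolding mf_integral_def by blast
  obtain S where IS: "integrable_seq p \<Gamma> S" and conv: "\<forall>i. (\<lambda>n. hausdorff p i (simple_int p (S n) E) x) \<longlonglongrightarrow> 0"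
    using x unfolding mf_integral_def by blast
  have Sg: "\<And>n. simple_mf (ck p) (S n)" using IS unfolding integrable_seq_def by blast
  have "support_fun f x = (LINT t:E|MM. support_fun f (\<Gamma> t))" if f: "f \<in> dual_space p" for f
  proof -
    obtain k c where fd: "dominated f k c" using dual_dominated[OF f] by blast
    have c: "c > 0" using fd unfolding dominated_def by auto
    define f1 where "f1 y = f y / c" for y
    have d1: "dominated f1 k 1" unfolding f1_def by (rule dom_div[OF fd])
    have l1: "(\<lambda>n. support_fun f1 (simple_int p (S n) E)) \<longlonglongrightarrow> (LINT t:E|MM. support_fun f1 (\<Gamma> t))"
      using main_conv[OF Gck IS E d1] by blast
    have l2: "(\<lambda>n. support_fun f1 (simple_int p (S n) E)) \<longlonglongrightarrow> support_fun f1 x"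
    proof (rule lim_cmp[OF _ spec[OF conv, of k]])
      fix n
      show "\<bar>support_fun f1 (simple_int p (S n) E) - support_fun f1 x\<bar> \<le> hausdorff p k (simple_int p (S n) E) x"
        using sf_haus[OF d1] si_good[OF Sg[of n], of E] ck_good[OF xck] unfolding good_def by fastforce
    qed
    have eq1: "support_fun f1 x = (LINT t:E|MM. support_fun f1 (\<Gamma> t))" using LIMSEQ_unique[OF l2 l1] .
    have "support_fun f1 x = support_fun f x / c" unfolding f1_def by (rule sf_div[OF fd ck_good[OF xck]])
    moreover have "(LINT t:E|MM. support_fun f1 (\<Gamma> t)) = (LINT t:E|MM. support_fun f (\<Gamma> t)) / c"
    proof -
      have "(LINT t:E|MM. support_fun f1 (\<Gamma> t)) = integral\<^sup>L MM (\<lambda>t. (indicator E t *\<^sub>R support_fun f (\<Gamma> t)) / c)"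
        unfolding set_lebesgue_integral_def
      proof (rule Bochner_Integration.integral_cong)
        fix t assume "t \<in> space MM"
        then have "good (\<Gamma> t)" using Gck ck_good by simp
        then show "indicator E t *\<^sub>R support_fun f1 (\<Gamma> t) = (indicator E t *\<^sub>R support_fun f (\<Gamma> t)) / c"
          unfolding f1_def using sf_div[OF fd] by simp
      qed simp
      also have "\<dots> = (LINT t:E|MM. support_fun f (\<Gamma> t)) / c"
        unfolding set_lebesgue_integral_def by (rule integral_divide_zero)
      finally show ?thesis .
    qed
    ultimately show ?thesis using eq1 c by simp
  qed
  then show ?thesis unfolding pettis_integral_def using xck by blast
qed

lemma ck_eq:
  assumes A: "A \<in> ck p" and B: "B \<in> ck p" and eq: "\<forall>f\<in>dual_space p. support_fun f A = support_fun f B"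
  shows "A = B"
proof -
  have gA: "good A" and gB: "good B" using ck_good A B by auto
  have H0: "hausdorff p i A B \<le> 0" for i
  proof (rule haus_le)
    show "bnd A" "A \<noteq> {}" "convex A" using gA unfolding good_def by auto
    show "bnd B" "B \<noteq> {}" "convex B" using gB unfolding good_def by auto
    fix f assume "linear f" "\<forall>x. f x \<le> p i x"
    then have "f \<in> dual_space p" using dominated_dual[OF dominated_Fi] by blast
    then show "\<bar>support_fun f A - support_fun f B\<bar> \<le> 0" using eq by simp
  qed
  have sub: "X \<subseteq> Y" if X: "X \<in> ck p" and Y: "Y \<in> ck p" and H: "\<And>i. hexcess p i X Y \<le> 0" for X Y
  proof
    fix z assume z: "z \<in> X"
    show "z \<in> Y"
    proof (rule ccontr)
      assume "z \<notin> Y"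
      moreover have "compactin (seminorm_topology p) Y" using Y unfolding ck_def by blast
      ultimately obtain i e where ie: "e > 0" "\<forall>k\<in>Y. e \<le> p i (z - k)" using compact_sep by blast
      have Yne: "Y \<noteq> {}" using Y unfolding ck_def by blast
      have "e \<le> pd i z Y" unfolding pd_def by (rule cINF_greatest[OF Yne]) (use ie in blast)
      also have "\<dots> \<le> hexcess p i X Y" by (rule hex_upper) (use ck_good[OF X] ck_good[OF Y] z in \<open>auto simp: good_def\<close>)
      also have "\<dots> \<le> 0" by (rule H)
      finally show False using ie by simp
    qed
  qed
  have "A \<subseteq> B" using sub[OF A B] H0 hex_le_haus(1) by (meson order_trans)
  moreover have "B \<subseteq> A" using sub[OF B A] H0 hex_le_haus(2) by (meson order_trans)
  ultimately show ?thesis by blast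
qed

end

theorem proposition4p3:
  fixes p :: "nat \<Rightarrow> 'a::real_vector \<Rightarrow> real"
    and \<Gamma> :: "real \<Rightarrow> 'a set"
  assumes "frechet_seminorms p"
    and "\<forall>t\<in>{0..1}. \<Gamma> t \<in> ck p"
    and "mf_integrable p \<Gamma>"
  shows "pettis_integrable p \<Gamma> \<and>
    (\<forall>E. E \<in> sets lebesgue \<and> E \<subseteq> {0..1} \<longrightarrow>
       (\<exists>x. mf_integral p \<Gamma> E x) \<and>
       (\<forall>x. mf_integral p \<Gamma> E x \<longleftrightarrow> pettis_integral p \<Gamma> E x))"
proof -
  interpret fre p by (rule fre.intro) (rule assms(1))
  have Gck: "\<forall>t\<in>{0..1}. \<Gamma> t \<in> ck p" by (rule assms(2))
  obtain S where IS: "integrable_seq p \<Gamma> S" using assms(3) unfolding mf_integrable_def by blast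
  have Sg: "\<And>n. simple_mf (ck p) (S n)" using IS unfolding integrable_seq_def by blast
  have ex: "\<exists>x. mf_integral p \<Gamma> E x" if E: "E \<in> sets lebesgue" "E \<subseteq> {0..1}" for E
  proof -
    have "\<exists>L. L \<in> ck p \<and> (\<forall>i. (\<lambda>n. hausdorff p i (simple_int p (S n) E) L) \<longlonglongrightarrow> 0)"
    proof (rule lim_exists)
      fix n show "good (simple_int p (S n) E)" by (rule si_good[OF Sg])
    next
      fix i and e :: real assume "e > 0"
      then show "\<exists>N. \<forall>n\<ge>N. \<forall>m\<ge>N. hausdorff p i (simple_int p (S n) E) (simple_int p (S m) E) < e"
        by (rule si_cauchy[OF IS E])
    qed
    then show ?thesis unfolding mf_integral_def using IS by blast
  qed
  have equiv: "mf_integral p \<Gamma> E x \<longleftrightarrow> pettis_integral p \<Gamma> E x"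
    if E: "E \<in> sets lebesgue" "E \<subseteq> {0..1}" for E x
  proof
    assume "mf_integral p \<Gamma> E x" then show "pettis_integral p \<Gamma> E x" by (rule pettis_of_mf[OF Gck E])
  next
    assume px: "pettis_integral p \<Gamma> E x"
    obtain L where L: "mf_integral p \<Gamma> E L" using ex[OF E] by blast
    have pL: "pettis_integral p \<Gamma> E L" by (rule pettis_of_mf[OF Gck E L])
    have "x = L"
    proof (rule ck_eq)
      show "x \<in> ck p" using px unfolding pettis_integral_def by blast
      show "L \<in> ck p" using pL unfolding pettis_integral_def by blast
      show "\<forall>f\<in>dual_space p. support_fun f x = support_fun f L"
        using px pL unfolding pettis_integral_def by simp
    qed
    then show "mf_integral p \<Gamma> E x" using L by simp
  qed
  have "pettis_integrable p \<Gamma>"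
    unfolding pettis_integrable_def
  proof (intro conjI ballI allI impI)
    fix f assume "f \<in> dual_space p"
    then show "integrable (lebesgue_on {0..1}) (\<lambda>t. support_fun f (\<Gamma> t))" by (rule sf_int_dual[OF Gck IS])
  next
    fix E :: "real set" assume E: "E \<in> sets lebesgue \<and> E \<subseteq> {0..1}"
    then obtain x where "mf_integral p \<Gamma> E x" using ex by blast
    then show "\<exists>x. pettis_integral p \<Gamma> E x" using equiv E by blast
  qed
  then show ?thesis using ex equiv by blast
qed


end
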